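(* Let $L$ be an algebraic frame, $X_L$ its Priestley space, and $Y_L$ the spatial part of $X_L$. The following are equivalent: (1) $L$ is an arithmetic frame; (2) $X_L$ is an arithmetic L-space; (3) $Y_L$ is a stably compactly based space.
   Context: A frame is a complete lattice satisfying $a\wedge\bigvee S=\bigvee\{a\wedge s\mid s\in S\}$. In a frame $L$, $a\ll b$ means whenever $b\le\bigvee S$ there is finite $T\subseteq S$ with $a\le\bigvee T$; $a$ is compact if $a\ll a$; $K(L)$ is the set of compact elements. $L$ is algebraic if $a=\bigvee\{b\in K(L)\mid b\le a\}$ for all $a$, and arithmetic if it is algebraic and $\ll$ is stable ($a\ll b$ and $a\ll c$ imply $a\ll b\wedge c$); equivalently, an algebraic frame in which the meet of two compact elements is compact. A Priestley space is a Stone space $X$ with a partial order such that clopen upsets separate points. An L-space is a Priestley space in which the downset of each clopen set is clopen and the closure of each open upset is open. ${\sf ClopUp}(X)$ is the set of clopen upsets; $\mathrm{cl}$ denotes closure. The Priestley space $X_L$ is the set of prime filters of $L$ ordered by inclusion with topology generated by the sets $\varphi(a)=\{x\mid a\in x\}$ and their complements. The spatial part of $X$ is $Y=\{y\in X\mid{\downarrow}y\text{ clopen}\}$, topologized by declaring $V\subseteq Y$ open iff $V=U\cap Y$ for some $U\in{\sf ClopUp}(X)$. A Scott upset is a closed upset $F$ with $\min F\subseteq Y$; ${\sf ClopSUp}(X)$ is the set of clopen Scott upsets. For $U,V\in{\sf ClopUp}(X)$, $V\ll U$ means that for every open upset $W$, $U\subseteq\mathrm{cl}\,W$ implies $V\subseteq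 W$; $\ker U=\bigcup\{V\in{\sf ClopUp}(X)\mid V\ll U\}$; $\mathrm{core}\,U=\bigcup\{V\in{\sf ClopSUp}(X)\mid V\subseteq U\}$. An algebraic L-space is one where $\mathrm{core}\,U$ is dense in $U$ for each $U\in{\sf ClopUp}(X)$; an arithmetic L-space is an algebraic L-space with $\ker(U\cap V)=\ker U\cap\ker V$ for all $U,V\in{\sf ClopUp}(X)$. A topological space is stably compactly based if it is sober, has a basis of compact open sets, and the intersection of any two compact open sets is compact. *)

theory Defs
  imports "HOL-Analysis.Analysis"
begin

definition is_frame :: "'a::complete_lattice itself \<Rightarrow> bool" where
  "is_frame _ \<longleftrightarrow> (\<forall>(a::'a) S. inf a (Sup S) = Sup ((\<lambda>s. inf a s) ` S))"

definition way_below :: "'a::complete_lattice \<Rightarrow> 'a \<Rightarrow> bool" where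
  "way_below a b \<longleftrightarrow> (\<forall>S. b \<le> Sup S \<longrightarrow> (\<exists>T. T \<subseteq> S \<and> finite T \<and> a \<le> Sup T))"

definition compact_el :: "'a::complete_lattice \<Rightarrow> bool" where
  "compact_el a \<longleftrightarrow> way_below a a"

definition algebraic_frame :: "'a::complete_lattice itself \<Rightarrow> bool" where
  "algebraic_frame t \<longleftrightarrow> is_frame t \<and>
     (\<forall>a::'a. a = Sup {b. compact_el b \<and> b \<le> a})"

definition arithmetic_frame :: "'a::complete_lattice itself \<Rightarrow> bool" where
  "arithmetic_frame t \<longleftrightarrow> algebraic_frame t \<and>
     (\<forall>a b c::'a. way_below a b \<and> way_below a c \<longrightarrow> way_below a (inf b c))"

definition prime_filter :: "'a::complete_lattice set \<Rightarrow> bool" where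
  "prime_filter F \<longleftrightarrow> top \<in> F \<and> bot \<notin> F \<and>
     (\<forall>a b. a \<in> F \<longrightarrow> a \<le> b \<longrightarrow> b \<in> F) \<and>
     (\<forall>a b. a \<in> F \<longrightarrow> b \<in> F \<longrightarrow> inf a b \<in> F) \<and>
     (\<forall>a b. sup a b \<in> F \<longrightarrow> a \<in> F \<or> b \<in> F)"

definition prime_filters :: "'a::complete_lattice itself \<Rightarrow> 'a set set" where
  "prime_filters _ = {F. prime_filter F}"

definition phi :: "'a::complete_lattice \<Rightarrow> 'a set set" where
  "phi a = {x. prime_filter x \<and> a \<in> x}"

definition XL :: "'a::complete_lattice itself \<Rightarrow> 'a set topology" where
  "XL t = topology_generated_by
     ((\<lambda>a. phi a) ` UNIV \<union> (\<lambda>a. prime_filters t - phi a) ` UNIV)"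

definition upset_in :: "'x topology \<Rightarrow> ('x \<Rightarrow> 'x \<Rightarrow> bool) \<Rightarrow> 'x set \<Rightarrow> bool" where
  "upset_in X le U \<longleftrightarrow> U \<subseteq> topspace X \<and>
     (\<forall>x\<in>U. \<forall>y\<in>topspace X. le x y \<longrightarrow> y \<in> U)"

definition down_of :: "'x topology \<Rightarrow> ('x \<Rightarrow> 'x \<Rightarrow> bool) \<Rightarrow> 'x set \<Rightarrow> 'x set" where
  "down_of X le A = {y \<in> topspace X. \<exists>x\<in>A. le y x}"

definition clopenin :: "'x topology \<Rightarrow> 'x set \<Rightarrow> bool" where
  "clopenin X U \<longleftrightarrow> openin X U \<and> closedin X U"

definition ClopUp :: "'x topology \<Rightarrow> ('x \<Rightarrow> 'x \<Rightarrow> bool) \<Rightarrow> 'x set set" where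
  "ClopUp X le = {U. clopenin X U \<and> upset_in X le U}"

definition stone_space :: "'x topology \<Rightarrow> bool" where
  "stone_space X \<longleftrightarrow> compact_space X \<and> Hausdorff_space X \<and>
     (\<forall>U x. openin X U \<and> x \<in> U \<longrightarrow> (\<exists>V. clopenin X V \<and> x \<in> V \<and> V \<subseteq> U))"

definition partial_order_on_space :: "'x topology \<Rightarrow> ('x \<Rightarrow> 'x \<Rightarrow> bool) \<Rightarrow> bool" where
  "partial_order_on_space X le \<longleftrightarrow>
     (\<forall>x\<in>topspace X. le x x) \<and>
     (\<forall>x\<in>topspace X. \<forall>y\<in>topspace X. le x y \<and> le y x \<longrightarrow> x = y) \<and>
     (\<forall>x\<in>topspace X. \<forall>y\<in>topspace X. \<forall>z\<in>topspace X. le x y \<and> le y z \<longrightarrow> le x z)"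

definition priestley_space :: "'x topology \<Rightarrow> ('x \<Rightarrow> 'x \<Rightarrow> bool) \<Rightarrow> bool" where
  "priestley_space X le \<longleftrightarrow> stone_space X \<and> partial_order_on_space X le \<and>
     (\<forall>x\<in>topspace X. \<forall>y\<in>topspace X. \<not> le x y \<longrightarrow>
        (\<exists>U\<in>ClopUp X le. x \<in> U \<and> y \<notin> U))"

definition L_space :: "'x topology \<Rightarrow> ('x \<Rightarrow> 'x \<Rightarrow> bool) \<Rightarrow> bool" where
  "L_space X le \<longleftrightarrow> priestley_space X le \<and>
     (\<forall>U. clopenin X U \<longrightarrow> clopenin X (down_of X le U)) \<and>
     (\<forall>U. openin X U \<and> upset_in X le U \<longrightarrow> openin X (X closure_of U))"

definition spatial_part :: "'x topology \<Rightarrow> ('x \<Rightarrow> 'x \<Rightarrow> bool) \<Rightarrow> 'x set" where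
  "spatial_part X le = {y \<in> topspace X. clopenin X (down_of X le {y})}"

definition spatial_topology :: "'x topology \<Rightarrow> ('x \<Rightarrow> 'x \<Rightarrow> bool) \<Rightarrow> 'x topology" where
  "spatial_topology X le =
     topology (\<lambda>V. \<exists>U\<in>ClopUp X le. V = U \<inter> spatial_part X le)"

definition min_of :: "('x \<Rightarrow> 'x \<Rightarrow> bool) \<Rightarrow> 'x set \<Rightarrow> 'x set" where
  "min_of le F = {x \<in> F. \<forall>y\<in>F. le y x \<longrightarrow> y = x}"

definition scott_upset :: "'x topology \<Rightarrow> ('x \<Rightarrow> 'x \<Rightarrow> bool) \<Rightarrow> 'x set \<Rightarrow> bool" where
  "scott_upset X le F \<longleftrightarrow> closedin X F \<and> upset_in X le F \<and>
     min_of le F \<subseteq> spatial_part X le"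

definition ClopSUp :: "'x topology \<Rightarrow> ('x \<Rightarrow> 'x \<Rightarrow> bool) \<Rightarrow> 'x set set" where
  "ClopSUp X le = {U \<in> ClopUp X le. scott_upset X le U}"

definition way_below_sp :: "'x topology \<Rightarrow> ('x \<Rightarrow> 'x \<Rightarrow> bool) \<Rightarrow> 'x set \<Rightarrow> 'x set \<Rightarrow> bool" where
  "way_below_sp X le V U \<longleftrightarrow>
     (\<forall>W. openin X W \<and> upset_in X le W \<longrightarrow> U \<subseteq> X closure_of W \<longrightarrow> V \<subseteq> W)"

definition ker_sp :: "'x topology \<Rightarrow> ('x \<Rightarrow> 'x \<Rightarrow> bool) \<Rightarrow> 'x set \<Rightarrow> 'x set" where
  "ker_sp X le U = \<Union>{V \<in> ClopUp X le. way_below_sp X le V U}"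

definition core_sp :: "'x topology \<Rightarrow> ('x \<Rightarrow> 'x \<Rightarrow> bool) \<Rightarrow> 'x set \<Rightarrow> 'x set" where
  "core_sp X le U = \<Union>{V \<in> ClopSUp X le. V \<subseteq> U}"

definition algebraic_L_space :: "'x topology \<Rightarrow> ('x \<Rightarrow> 'x \<Rightarrow> bool) \<Rightarrow> bool" where
  "algebraic_L_space X le \<longleftrightarrow> L_space X le \<and>
     (\<forall>U\<in>ClopUp X le. U \<subseteq> X closure_of (core_sp X le U))"

definition arithmetic_L_space :: "'x topology \<Rightarrow> ('x \<Rightarrow> 'x \<Rightarrow> bool) \<Rightarrow> bool" where
  "arithmetic_L_space X le \<longleftrightarrow> algebraic_L_space X le \<and>
     (\<forall>U\<in>ClopUp X le. \<forall>V\<in>ClopUp X le. ker_sp X le (U \<inter> V) = ker_sp X le U \<inter> ker_sp X le V)"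

definition irreducible_closed :: "'x topology \<Rightarrow> 'x set \<Rightarrow> bool" where
  "irreducible_closed X C \<longleftrightarrow> closedin X C \<and> C \<noteq> {} \<and>
     (\<forall>A B. closedin X A \<and> closedin X B \<and> C \<subseteq> A \<union> B \<longrightarrow> C \<subseteq> A \<or> C \<subseteq> B)"

definition sober_space :: "'x topology \<Rightarrow> bool" where
  "sober_space X \<longleftrightarrow> (\<forall>C. irreducible_closed X C \<longrightarrow>
     (\<exists>!x. x \<in> topspace X \<and> C = X closure_of {x}))"

definition stably_compactly_based :: "'x topology \<Rightarrow> bool" where
  "stably_compactly_based X \<longleftrightarrow> sober_space X \<and>
     (\<forall>U x. openin X U \<and> x \<in> U \<longrightarrow>
        (\<exists>V. openin X V \<and> compactin X V \<and> x \<in> V \<and> V \<subseteq> U)) \<and>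
     (\<forall>U V. openin X U \<and> compactin X U \<and> openin X V \<and> compactin X V \<longrightarrow>
        compactin X (U \<inter> V))"

end

theory Submission
  imports Defs
begin

definition filt :: "'a::complete_lattice set \<Rightarrow> bool" where
  "filt G \<longleftrightarrow> G \<noteq> {} \<and> (\<forall>a\<in>G. \<forall>b. a \<le> b \<longrightarrow> b \<in> G) \<and> (\<forall>a\<in>G. \<forall>b\<in>G. inf a b \<in> G)"

definition idl :: "'a::complete_lattice set \<Rightarrow> bool" where
  "idl I \<longleftrightarrow> I \<noteq> {} \<and> (\<forall>a\<in>I. \<forall>b. b \<le> a \<longrightarrow> b \<in> I) \<and> (\<forall>a\<in>I. \<forall>b\<in>I. sup a b \<in> I)"

lemma filt_up: "filt G \<Longrightarrow> a \<in> G \<Longrightarrow> a \<le> b \<Longrightarrow> b \<in> G" unfolding filt_def by blast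
lemma filt_inf: "filt G \<Longrightarrow> a \<in> G \<Longrightarrow> b \<in> G \<Longrightarrow> inf a b \<in> G" unfolding filt_def by blast
lemma filt_ne: "filt G \<Longrightarrow> G \<noteq> {}" unfolding filt_def by blast
lemma filt_top: "filt G \<Longrightarrow> top \<in> G" unfolding filt_def by (meson ex_in_conv top_greatest)
lemma idl_down: "idl G \<Longrightarrow> a \<in> G \<Longrightarrow> b \<le> a \<Longrightarrow> b \<in> G" unfolding idl_def by blast
lemma idl_sup: "idl G \<Longrightarrow> a \<in> G \<Longrightarrow> b \<in> G \<Longrightarrow> sup a b \<in> G" unfolding idl_def by blast
lemma idl_bot: "idl G \<Longrightarrow> bot \<in> G" unfolding idl_def by (meson ex_in_conv bot_least)

lemma frame_Sup:
  fixes t :: "'a::complete_lattice itself"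
  assumes "is_frame t"
  shows "inf (a::'a) (Sup S) = Sup ((\<lambda>s. inf a s) ` S)"
  using assms unfolding is_frame_def by blast

lemma frame_dist:
  fixes t :: "'a::complete_lattice itself"
  assumes "is_frame t"
  shows "inf (a::'a) (sup b c) = sup (inf a b) (inf a c)"
  using frame_Sup[OF assms, of a "{b,c}"] by simp

lemma frame_dist2:
  fixes t :: "'a::complete_lattice itself"
  assumes "is_frame t"
  shows "sup (a::'a) (inf b c) = inf (sup a b) (sup a c)"
proof -
  have "inf (sup a b) (sup a c) = sup (inf (sup a b) a) (inf (sup a b) c)"
    using frame_dist[OF assms] by blast
  also have "inf (sup a b) a = a" by (simp add: inf.absorb2)
  also have "inf (sup a b) c = sup (inf c a) (inf c b)"
    using frame_dist[OF assms, of c a b] by (simp add: inf_commute)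
  also have "sup a (sup (inf c a) (inf c b)) = sup a (inf b c)"
    by (metis inf.cobounded2 inf_commute sup.absorb1 sup_assoc)
  finally show ?thesis by simp
qed

lemma pf_top: "prime_filter x \<Longrightarrow> top \<in> x" unfolding prime_filter_def by blast
lemma pf_bot: "prime_filter x \<Longrightarrow> bot \<notin> x" unfolding prime_filter_def by blast
lemma pf_up: "prime_filter x \<Longrightarrow> a \<in> x \<Longrightarrow> a \<le> b \<Longrightarrow> b \<in> x" unfolding prime_filter_def by blast
lemma pf_inf: "prime_filter x \<Longrightarrow> inf a b \<in> x \<longleftrightarrow> a \<in> x \<and> b \<in> x"
  unfolding prime_filter_def by (meson inf.cobounded1 inf.cobounded2)
lemma pf_sup: "prime_filter x \<Longrightarrow> sup a b \<in> x \<longleftrightarrow> a \<in> x \<or> b \<in> x"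
  unfolding prime_filter_def by (meson sup.cobounded1 sup.cobounded2)

lemma pf_Inf_fin: "finite B \<Longrightarrow> prime_filter x \<Longrightarrow> B \<subseteq> x \<Longrightarrow> Inf B \<in> x"
proof (induction B rule: finite_induct)
  case empty then show ?case by (simp add: pf_top)
next
  case (insert b B) then show ?case by (simp add: pf_inf)
qed

lemma pf_Sup_fin: "finite A \<Longrightarrow> prime_filter x \<Longrightarrow> Sup A \<in> x \<Longrightarrow> \<exists>a\<in>A. a \<in> x"
proof (induction A rule: finite_induct)
  case empty then show ?case by (simp add: pf_bot)
next
  case (insert b B) then show ?case by (auto simp add: pf_sup)
qed

lemma pft:
  fixes t :: "'a::complete_lattice itself" and F I :: "'a set"
  assumes fr: "is_frame t" and F: "filt F" and I: "idl I" and disj: "F \<inter> I = {}"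
  shows "\<exists>x. prime_filter x \<and> F \<subseteq> x \<and> x \<inter> I = {}"
proof -
  let ?A = "{G. filt G \<and> F \<subseteq> G \<and> G \<inter> I = {}}"
  have "\<exists>M\<in>?A. \<forall>X\<in>?A. M \<subseteq> X \<longrightarrow> X = M"
  proof (rule subset_Zorn_nonempty)
    show "?A \<noteq> {}" using F disj by blast
  next
    fix C assume C: "C \<noteq> {}" "subset.chain ?A C"
    have ch: "\<And>X Y. X \<in> C \<Longrightarrow> Y \<in> C \<Longrightarrow> X \<subseteq> Y \<or> Y \<subseteq> X"
      using C(2) unfolding subset_chain_def by blast
    have sub: "C \<subseteq> ?A"
      using C(2) unfolding subset_chain_def by blast
    have "filt (\<Union>C)"
      unfolding filt_def
    proof (intro conjI ballI allI impI)
      obtain X where X: "X \<in> C" using C(1) by blast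
      then have "filt X" using sub by blast
      then have "X \<noteq> {}" by (rule filt_ne)
      then show "\<Union>C \<noteq> {}" using X by blast
    next
      fix a b assume "a \<in> \<Union>C" "a \<le> b"
      then obtain X where "X \<in> C" "a \<in> X" by blast
      moreover then have "filt X" using sub by blast
      ultimately show "b \<in> \<Union>C" using filt_up \<open>a \<le> b\<close> by blast
    next
      fix a b assume a: "a \<in> \<Union>C" and b: "b \<in> \<Union>C"
      then obtain X Y where "X \<in> C" "Y \<in> C" "a \<in> X" "b \<in> Y" by blast
      then have XY: "X \<in> C" "Y \<in> C" "a \<in> X" "b \<in> Y" by blast+
      show "inf a b \<in> \<Union>C"
      proof (cases "X \<subseteq> Y")
        case True
        then have "filt Y" using XY sub by blast
        then have "inf a b \<in> Y" using True XY filt_inf by blast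
        then show ?thesis using XY by blast
      next
        case False
        then have "Y \<subseteq> X" using ch XY by blast
        moreover have "filt X" using XY sub by blast
        ultimately have "inf a b \<in> X" using XY filt_inf by blast
        then show ?thesis using XY by blast
      qed
    qed
    then show "\<Union>C \<in> ?A" using C(1) sub by blast
  qed
  then obtain M where M0: "M \<in> ?A" and max0: "\<forall>X\<in>?A. M \<subseteq> X \<longrightarrow> X = M" by (rule bexE)
  have M: "filt M" "F \<subseteq> M" "M \<inter> I = {}" using M0 by simp_all
  have max: "\<And>X. X \<in> ?A \<Longrightarrow> M \<subseteq> X \<Longrightarrow> X = M" using max0 by blast
  have Mup: "\<And>a b. a \<in> M \<Longrightarrow> a \<le> b \<Longrightarrow> b \<in> M" and Minf: "\<And>a b. a \<in> M \<Longrightarrow> b \<in> M \<Longrightarrow> inf a b \<in> M"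
    using M(1) filt_up filt_inf by blast+
  have Idown: "\<And>a b. a \<in> I \<Longrightarrow> b \<le> a \<Longrightarrow> b \<in> I" and Isup: "\<And>a b. a \<in> I \<Longrightarrow> b \<in> I \<Longrightarrow> sup a b \<in> I"
    using I idl_down idl_sup by blast+
  have ext: "\<exists>g\<in>M. \<exists>i\<in>I. inf g a \<le> i" if "a \<notin> M" for a
  proof (rule ccontr)
    assume nz: "\<not> ?thesis"
    let ?G = "{z. \<exists>g\<in>M. inf g a \<le> z}"
    have "filt ?G" unfolding filt_def
    proof (intro conjI ballI allI impI)
      have "inf top a \<in> ?G" using filt_top[OF M(1)] by blast
      then show "?G \<noteq> {}" by blast
    next
      fix x y assume "x \<in> ?G" "x \<le> y" then show "y \<in> ?G" using order_trans by blast
    next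
      fix x y assume "x \<in> ?G" "y \<in> ?G"
      then obtain g g' where g: "g \<in> M" "inf g a \<le> x" "g' \<in> M" "inf g' a \<le> y" by blast
      then have "inf (inf g g') a \<le> inf x y"
        by (meson inf_le1 inf_le2 le_inf_iff order_trans)
      then show "inf x y \<in> ?G" using Minf[OF g(1) g(3)] by blast
    qed
    moreover have "F \<subseteq> ?G" using M(2) by (force)
    moreover have "?G \<inter> I = {}" using nz by blast
    moreover have "M \<subseteq> ?G" by force
    ultimately have "?G = M" using max by blast
    moreover have "a \<in> ?G" using filt_top[OF M(1)] by (metis (mono_tags, lifting) inf_le2 mem_Collect_eq)
    ultimately show False using that by blast
  qed
  have "prime_filter M" unfolding prime_filter_def
  proof (intro conjI allI impI)
    show "top \<in> M" using M(1) by (rule filt_top)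
  next
    show "bot \<notin> M" using M(3) idl_bot[OF I] by blast
  next
    fix a b assume "a \<in> M" "a \<le> b" then show "b \<in> M" using Mup by blast
  next
    fix a b assume "a \<in> M" "b \<in> M" then show "inf a b \<in> M" using Minf by blast
  next
    fix a b assume ab: "sup a b \<in> M"
    show "a \<in> M \<or> b \<in> M"
    proof (rule ccontr)
      assume "\<not> (a \<in> M \<or> b \<in> M)"
      then obtain g i g' i' where gi: "g \<in> M" "i \<in> I" "inf g a \<le> i" "g' \<in> M" "i' \<in> I" "inf g' b \<le> i'"
        using ext by meson
      let ?h = "inf (inf g g') (sup a b)"
      have hM: "?h \<in> M" using Minf[OF Minf[OF gi(1) gi(4)] ab] .
      have "?h = sup (inf (inf g g') a) (inf (inf g g') b)" by (rule frame_dist[OF fr])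
      also have "\<dots> \<le> sup i i'"
      proof (rule sup_mono)
        have "inf (inf g g') a \<le> inf g a" by (rule inf_mono[OF inf_le1 order_refl])
        then show "inf (inf g g') a \<le> i" using gi(3) by (rule order_trans)
        have "inf (inf g g') b \<le> inf g' b" by (rule inf_mono[OF inf_le2 order_refl])
        then show "inf (inf g g') b \<le> i'" using gi(6) by (rule order_trans)
      qed
      finally have "?h \<in> I" using Idown Isup gi(2,5) by blast
      then show False using hM M(3) by blast
    qed
  qed
  then show ?thesis using M by blast
qed

lemma pft_elem:
  fixes t :: "'a::complete_lattice itself" and a b :: 'a
  assumes fr: "is_frame t" and "\<not> a \<le> b"
  shows "\<exists>x. prime_filter x \<and> a \<in> x \<and> b \<notin> x"
proof -
  have "filt {z. a \<le> z}" unfolding filt_def by auto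
  moreover have "idl {z. z \<le> b}" unfolding idl_def by auto
  moreover have "{z. a \<le> z} \<inter> {z. z \<le> b} = {}" using assms(2) order_trans by blast
  ultimately obtain x where "prime_filter x" "{z. a \<le> z} \<subseteq> x" "x \<inter> {z. z \<le> b} = {}"
    using pft[OF fr] by meson
  then show ?thesis by blast
qed


section \<open>The Priestley space\<close>

lemma phi_sub: "phi a \<subseteq> prime_filters t"
  unfolding phi_def prime_filters_def by blast

lemma phi_iff: "x \<in> phi a \<longleftrightarrow> prime_filter x \<and> a \<in> x"
  unfolding phi_def by blast

lemma pfs_iff: "x \<in> prime_filters t \<longleftrightarrow> prime_filter x"
  unfolding prime_filters_def by blast

lemma topspace_XL: "topspace (XL t) = prime_filters t"
proof -
  have "\<Union>((\<lambda>a. phi a) ` UNIV \<union> (\<lambda>a. prime_filters t - phi a) ` UNIV) = prime_filters t"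
  proof
    show "\<Union>((\<lambda>a. phi a) ` UNIV \<union> (\<lambda>a. prime_filters t - phi a) ` UNIV) \<subseteq> prime_filters t"
      using phi_sub by blast
    show "prime_filters t \<subseteq> \<Union>((\<lambda>a. phi a) ` UNIV \<union> (\<lambda>a. prime_filters t - phi a) ` UNIV)"
      by blast
  qed
  then show ?thesis unfolding XL_def by simp
qed

lemma open_phi: "openin (XL t) (phi (a::'a::complete_lattice))"
  unfolding XL_def by (rule topology_generated_by_Basis) blast

lemma open_nphi: "openin (XL t) (prime_filters t - phi (a::'a::complete_lattice))"
  unfolding XL_def by (rule topology_generated_by_Basis) blast

lemma closed_phi: "closedin (XL t) (phi (a::'a::complete_lattice))"
  unfolding closedin_def topspace_XL using open_nphi phi_sub by blast

lemma closed_nphi: "closedin (XL t) (prime_filters t - phi (a::'a::complete_lattice))"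
proof -
  have "prime_filters t - (prime_filters t - phi a) = phi a" using phi_sub by blast
  then show ?thesis unfolding closedin_def topspace_XL using open_phi by auto
qed

lemma clopen_phi: "clopenin (XL t) (phi (a::'a::complete_lattice))"
  unfolding clopenin_def using open_phi closed_phi by blast

lemma clopen_basic: "clopenin (XL t) (phi (a::'a::complete_lattice) - phi b)"
proof -
  have e: "phi a - phi b = phi a \<inter> (prime_filters t - phi b)" using phi_sub by blast
  show ?thesis unfolding clopenin_def e
    using open_phi open_nphi closed_phi closed_nphi by (metis closedin_Int openin_Int)
qed

lemma phi_inf: "phi (inf a b) = phi a \<inter> phi b"
  unfolding phi_def by (auto simp: pf_inf)

lemma phi_sup: "phi (sup a b) = phi a \<union> phi b"
  unfolding phi_def by (auto simp: pf_sup)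

lemma phi_top: "phi top = prime_filters t"
  unfolding phi_def prime_filters_def using pf_top by blast

lemma phi_bot: "phi bot = {}"
  unfolding phi_def using pf_bot by blast

lemma phi_mono: "a \<le> b \<Longrightarrow> phi a \<subseteq> phi b"
  unfolding phi_def using pf_up by blast

lemma phi_Sup_fin:
  assumes "finite A" shows "phi (Sup A) = \<Union>(phi ` A)"
proof
  show "phi (Sup A) \<subseteq> \<Union>(phi ` A)"
  proof
    fix x assume "x \<in> phi (Sup A)"
    then have "prime_filter x" "Sup A \<in> x" unfolding phi_def by auto
    then obtain a where "a \<in> A" "a \<in> x" using pf_Sup_fin[OF assms] by blast
    then show "x \<in> \<Union>(phi ` A)" using \<open>prime_filter x\<close> unfolding phi_def by blast
  qed
  show "\<Union>(phi ` A) \<subseteq> phi (Sup A)"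
    using phi_mono[OF Sup_upper] by blast
qed

lemma phi_Inf_fin:
  assumes "finite A" shows "phi (Inf A) = prime_filters t \<inter> \<Inter>(phi ` A)"
proof
  show "phi (Inf A) \<subseteq> prime_filters t \<inter> \<Inter>(phi ` A)"
    using phi_mono[OF Inf_lower] phi_sub by blast
  show "prime_filters t \<inter> \<Inter>(phi ` A) \<subseteq> phi (Inf A)"
  proof
    fix x assume x: "x \<in> prime_filters t \<inter> \<Inter>(phi ` A)"
    then have "prime_filter x" "A \<subseteq> x" unfolding phi_def prime_filters_def by auto
    then show "x \<in> phi (Inf A)" using pf_Inf_fin[OF assms] unfolding phi_def by blast
  qed
qed

lemma phi_le:
  fixes t :: "'a::complete_lattice itself" and a b :: 'a
  assumes fr: "is_frame t" and "phi a \<subseteq> phi b"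
  shows "a \<le> b"
  using pft_elem[OF fr, of a b] assms(2) unfolding phi_def by blast

lemma open_basic:
  fixes t :: "'a::complete_lattice itself"
  assumes "openin (XL t) U" and "x \<in> U"
  shows "\<exists>a b::'a. x \<in> phi a \<and> x \<notin> phi b \<and> phi a - phi b \<subseteq> U"
proof -
  have "generate_topology_on ((\<lambda>a. phi a) ` UNIV \<union> (\<lambda>a. prime_filters t - phi a) ` UNIV) U"
    using assms(1) unfolding XL_def openin_topology_generated_by_iff .
  then show ?thesis using assms(2)
  proof (induction arbitrary: x rule: generate_topology_on.induct)
    case Empty then show ?case by blast
  next
    case (Int U1 U2)
    obtain a1 b1 where 1: "x \<in> phi (a1::'a)" "x \<notin> phi b1" "phi a1 - phi b1 \<subseteq> U1" using Int by blast
    obtain a2 b2 where 2: "x \<in> phi (a2::'a)" "x \<notin> phi b2" "phi a2 - phi b2 \<subseteq> U2" using Int by blast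
    have "x \<in> phi (inf a1 a2)" "x \<notin> phi (sup b1 b2)" using 1 2 phi_inf phi_sup by blast+
    moreover have "phi (inf a1 a2) - phi (sup b1 b2) \<subseteq> U1 \<inter> U2" unfolding phi_inf phi_sup using 1 2 by blast
    ultimately show ?case by blast
  next
    case (UN K)
    then obtain k where "k \<in> K" "x \<in> k" by blast
    with UN obtain a b where "x \<in> phi (a::'a)" "x \<notin> phi b" "phi a - phi b \<subseteq> k" by blast
    then show ?case using \<open>k \<in> K\<close> by blast
  next
    case (Basis s)
    then consider (p) a where "s = phi a" | (n) a where "s = prime_filters t - phi a" by blast
    then show ?case
    proof cases
      case p
      have "x \<in> phi a" "x \<notin> phi (bot::'a)" "phi a - phi bot \<subseteq> s" using Basis(2) p by (auto simp: phi_bot)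
      then show ?thesis by blast
    next
      case n
      have "x \<in> phi (top::'a)" "x \<notin> phi a" "phi top - phi a \<subseteq> s" using Basis(2) n by (auto simp: phi_top[of t])
      then show ?thesis by blast
    qed
  qed
qed


lemma compact_XL:
  fixes t :: "'a::complete_lattice itself"
  assumes fr: "is_frame t"
  shows "compact_space (XL t)"
proof (rule ccontr)
  let ?X = "XL t" and ?P = "prime_filters t"
  let ?A = "{\<U>. (\<forall>U\<in>\<U>. openin ?X U) \<and> ?P \<subseteq> \<Union>\<U> \<and> \<not> (\<exists>\<F>. finite \<F> \<and> \<F> \<subseteq> \<U> \<and> ?P \<subseteq> \<Union>\<F>)}"
  assume "\<not> compact_space ?X"
  then have ne: "?A \<noteq> {}"
    unfolding compact_space_def compactin_def topspace_XL by blast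
  have "\<exists>M\<in>?A. \<forall>Z\<in>?A. M \<subseteq> Z \<longrightarrow> Z = M"
  proof (rule subset_Zorn_nonempty[OF ne])
    fix C assume C: "C \<noteq> {}" "subset.chain ?A C"
    have sub: "C \<subseteq> ?A" using C(2) by (simp add: subset_chain_def)
    have o: "\<forall>U\<in>\<Union>C. openin ?X U"
    proof
      fix U assume "U \<in> \<Union>C"
      then obtain Z where Z: "Z \<in> C" "U \<in> Z" by blast
      have "Z \<in> ?A" using sub Z(1) by (rule subsetD)
      then show "openin ?X U" using \<open>U \<in> Z\<close> by simp
    qed
    obtain Z where Z: "Z \<in> C" using C(1) by blast
    have "Z \<in> ?A" using subsetD[OF sub Z] .
    then have "?P \<subseteq> \<Union>Z" by simp
    then have cov: "?P \<subseteq> \<Union>(\<Union>C)" using Z by blast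
    have nf: "\<not> (\<exists>\<F>. finite \<F> \<and> \<F> \<subseteq> \<Union>C \<and> ?P \<subseteq> \<Union>\<F>)"
    proof
      assume "\<exists>\<F>. finite \<F> \<and> \<F> \<subseteq> \<Union>C \<and> ?P \<subseteq> \<Union>\<F>"
      then obtain \<F> where F: "finite \<F>" "\<F> \<subseteq> \<Union>C" "?P \<subseteq> \<Union>\<F>" by blast
      obtain B where "B \<in> C" "\<F> \<subseteq> B"
        using finite_subset_Union_chain[OF F(1) F(2) C(1) C(2)] by blast
      have "B \<in> ?A" using sub \<open>B \<in> C\<close> by (rule subsetD)
      then show False using F \<open>\<F> \<subseteq> B\<close> by simp
    qed
    show "\<Union>C \<in> ?A" using o cov nf by simp
  qed
  then obtain M where M0: "M \<in> ?A" and max0: "\<forall>Z\<in>?A. M \<subseteq> Z \<longrightarrow> Z = M" by (rule bexE)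
  have M: "\<forall>U\<in>M. openin ?X U" "?P \<subseteq> \<Union>M"
    "\<not> (\<exists>\<F>. finite \<F> \<and> \<F> \<subseteq> M \<and> ?P \<subseteq> \<Union>\<F>)" using M0 by simp_all
  have max: "\<And>Z. Z \<in> ?A \<Longrightarrow> M \<subseteq> Z \<Longrightarrow> Z = M" using max0 by blast
  have add: "\<exists>\<F>. finite \<F> \<and> \<F> \<subseteq> M \<and> ?P \<subseteq> V \<union> \<Union>\<F>" if "openin ?X V" "V \<notin> M" for V
  proof -
    have o: "\<forall>U\<in>insert V M. openin ?X U" using M(1) that(1) by blast
    have c: "?P \<subseteq> \<Union>(insert V M)" using M(2) by blast
    have "\<exists>\<F>. finite \<F> \<and> \<F> \<subseteq> insert V M \<and> ?P \<subseteq> \<Union>\<F>"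
    proof (rule ccontr)
      assume "\<not> ?thesis"
      then have "insert V M \<in> ?A" using o c by simp
      then have "insert V M = M" by (rule max[OF _ subset_insertI])
      then show False using that by blast
    qed
    then obtain \<F> where "finite \<F>" "\<F> \<subseteq> insert V M" "?P \<subseteq> \<Union>\<F>" by blast
    then have "finite (\<F> - {V})" "\<F> - {V} \<subseteq> M" "?P \<subseteq> V \<union> \<Union>(\<F> - {V})" by blast+
    then show ?thesis by blast
  qed
  have sb: "(\<exists>a::'a. phi a \<in> M \<and> a \<in> x) \<or> (\<exists>b. ?P - phi b \<in> M \<and> b \<notin> x)" if xP: "x \<in> ?P" for x
  proof (rule ccontr)
    assume nn: "\<not> ?thesis"
    obtain U where U: "U \<in> M" "x \<in> U" using M(2) xP by blast
    obtain a b :: 'a where ab: "x \<in> phi a" "x \<notin> phi b" "phi a - phi b \<subseteq> U"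
      using open_basic[of t U x] U M(1) by blast
    have "a \<in> x" using ab(1) unfolding phi_def by blast
    then have "phi a \<notin> M" using nn by blast
    then have "\<exists>\<F>. finite \<F> \<and> \<F> \<subseteq> M \<and> ?P \<subseteq> phi a \<union> \<Union>\<F>" by (rule add[OF open_phi[of t a]])
    then obtain F1 where F1: "finite F1" "F1 \<subseteq> M" "?P \<subseteq> phi a \<union> \<Union>F1" by blast
    have "b \<notin> x" using ab(2) xP unfolding phi_def prime_filters_def by blast
    then have "?P - phi b \<notin> M" using nn by blast
    then have "\<exists>\<F>. finite \<F> \<and> \<F> \<subseteq> M \<and> ?P \<subseteq> (?P - phi b) \<union> \<Union>\<F>" by (rule add[OF open_nphi[of t b]])
    then obtain F2 where F2: "finite F2" "F2 \<subseteq> M" "?P \<subseteq> (?P - phi b) \<union> \<Union>F2" by blast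
    have "?P \<subseteq> \<Union>(insert U (F1 \<union> F2))"
    proof
      fix y assume y: "y \<in> ?P"
      show "y \<in> \<Union>(insert U (F1 \<union> F2))"
      proof (cases "y \<in> \<Union>F1 \<or> y \<in> \<Union>F2")
        case True then show ?thesis by blast
      next
        case False
        then have "y \<in> phi a" "y \<notin> phi b" using y F1(3) F2(3) by blast+
        then show ?thesis using ab(3) by blast
      qed
    qed
    moreover have "finite (insert U (F1 \<union> F2))" "insert U (F1 \<union> F2) \<subseteq> M" using F1 F2 U by auto
    ultimately show False using M(3) by blast
  qed
  let ?AA = "{a. phi a \<in> M}" and ?BB = "{b. ?P - phi b \<in> M}"
  let ?F = "{z. \<exists>B0. finite B0 \<and> B0 \<subseteq> ?BB \<and> Inf B0 \<le> z}"
  let ?I = "{z. \<exists>A0. finite A0 \<and> A0 \<subseteq> ?AA \<and> z \<le> Sup A0}"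
  have fF: "filt ?F" unfolding filt_def
  proof (intro conjI ballI allI impI)
    show "?F \<noteq> {}" by (metis (mono_tags, lifting) empty_Collect_eq empty_subsetI finite.emptyI order_refl)
  next
    fix x y assume "x \<in> ?F" "x \<le> y" then show "y \<in> ?F" using order_trans by blast
  next
    fix x y assume "x \<in> ?F" "y \<in> ?F"
    then obtain B1 B2 where B: "finite B1" "B1 \<subseteq> ?BB" "Inf B1 \<le> x" "finite B2" "B2 \<subseteq> ?BB" "Inf B2 \<le> y"
      by blast
    then have "Inf (B1 \<union> B2) \<le> inf x y" by (simp add: Inf_union_distrib le_infI1 le_infI2)
    then show "inf x y \<in> ?F" using B by (metis (mono_tags, lifting) Un_subset_iff finite_UnI mem_Collect_eq)
  qed
  have iI: "idl ?I" unfolding idl_def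
  proof (intro conjI ballI allI impI)
    show "?I \<noteq> {}" by (metis (mono_tags, lifting) empty_Collect_eq empty_subsetI finite.emptyI order_refl)
  next
    fix x y assume "x \<in> ?I" "y \<le> x" then show "y \<in> ?I" using order_trans by blast
  next
    fix x y assume "x \<in> ?I" "y \<in> ?I"
    then obtain A1 A2 where A: "finite A1" "A1 \<subseteq> ?AA" "x \<le> Sup A1" "finite A2" "A2 \<subseteq> ?AA" "y \<le> Sup A2"
      by blast
    then have "sup x y \<le> Sup (A1 \<union> A2)" by (simp add: Sup_union_distrib le_supI1 le_supI2)
    then show "sup x y \<in> ?I" using A by (metis (mono_tags, lifting) Un_subset_iff finite_UnI mem_Collect_eq)
  qed
  show False
  proof (cases "?F \<inter> ?I = {}")
    case True
    then obtain x where x: "prime_filter x" "?F \<subseteq> x" "x \<inter> ?I = {}" using pft[OF fr fF iI] by blast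
    then have "x \<in> ?P" unfolding prime_filters_def by blast
    from sb[OF this] show False
    proof
      assume "\<exists>a. phi a \<in> M \<and> a \<in> x"
      then obtain a where "phi a \<in> M" "a \<in> x" by blast
      moreover have "a \<in> ?I" using \<open>phi a \<in> M\<close> by (intro CollectI exI[of _ "{a}"]) simp
      ultimately show False using x by blast
    next
      assume "\<exists>b. ?P - phi b \<in> M \<and> b \<notin> x"
      then obtain b where "?P - phi b \<in> M" "b \<notin> x" by blast
      moreover have "b \<in> ?F" using \<open>?P - phi b \<in> M\<close> by (intro CollectI exI[of _ "{b}"]) simp
      ultimately show False using x by blast
    qed
  next
    case False
    then obtain z A0 B0 where AB: "finite A0" "A0 \<subseteq> ?AA" "z \<le> Sup A0" "finite B0" "B0 \<subseteq> ?BB" "Inf B0 \<le> z"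
      by blast
    let ?G = "phi ` A0 \<union> (\<lambda>b. ?P - phi b) ` B0"
    have "?P \<subseteq> \<Union>?G"
    proof
      fix y assume y: "y \<in> ?P"
      then have py: "prime_filter y" unfolding prime_filters_def by blast
      show "y \<in> \<Union>?G"
      proof (cases "B0 \<subseteq> y")
        case True
        then have "Inf B0 \<in> y" using pf_Inf_fin[OF AB(4) py] by blast
        then have "Sup A0 \<in> y" using AB(3,6) pf_up[OF py] by (meson order_trans)
        then obtain a where "a \<in> A0" "a \<in> y" using pf_Sup_fin[OF AB(1) py] by blast
        then show ?thesis using py unfolding phi_def by blast
      next
        case False
        then obtain b where "b \<in> B0" "b \<notin> y" by blast
        then show ?thesis using y unfolding phi_def by blast
      qed
    qed
    moreover have "finite ?G" using AB by blast
    moreover have "?G \<subseteq> M" using AB by blast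
    ultimately have ex: "finite ?G \<and> ?G \<subseteq> M \<and> ?P \<subseteq> \<Union>?G" by (intro conjI)
    then have "\<exists>\<F>. finite \<F> \<and> \<F> \<subseteq> M \<and> ?P \<subseteq> \<Union>\<F>" by (rule exI)
    with M(3) show False by contradiction
  qed
qed




lemma phi_upset: "upset_in (XL t) (\<subseteq>) (phi (a::'a::complete_lattice))"
  unfolding upset_in_def topspace_XL using phi_sub[of a t]
  by (auto simp: phi_iff pfs_iff)

lemma phi_ClopUp: "phi (a::'a::complete_lattice) \<in> ClopUp (XL t) (\<subseteq>)"
  unfolding ClopUp_def using clopen_phi phi_upset by blast

lemma stone_XL:
  fixes t :: "'a::complete_lattice itself"
  assumes fr: "is_frame t"
  shows "stone_space (XL t)"
  unfolding stone_space_def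
proof (intro conjI allI impI)
  show "compact_space (XL t)" by (rule compact_XL[OF fr])
next
  show "Hausdorff_space (XL t)" unfolding Hausdorff_space_def
  proof (intro allI impI)
    fix x y assume xy: "x \<in> topspace (XL t) \<and> y \<in> topspace (XL t) \<and> x \<noteq> y"
    then have px: "prime_filter x" "prime_filter y" unfolding topspace_XL pfs_iff by auto
    from xy obtain a::'a where "(a \<in> x \<and> a \<notin> y) \<or> (a \<in> y \<and> a \<notin> x)" by blast
    then show "\<exists>U V. openin (XL t) U \<and> openin (XL t) V \<and> x \<in> U \<and> y \<in> V \<and> disjnt U V"
    proof
      assume a: "a \<in> x \<and> a \<notin> y"
      show ?thesis
        apply (rule exI[of _ "phi a"], rule exI[of _ "prime_filters t - phi a"])
        using a px open_phi open_nphi by (auto simp: phi_iff pfs_iff disjnt_def)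
    next
      assume a: "a \<in> y \<and> a \<notin> x"
      show ?thesis
        apply (rule exI[of _ "prime_filters t - phi a"], rule exI[of _ "phi a"])
        using a px open_phi open_nphi by (auto simp: phi_iff pfs_iff disjnt_def)
    qed
  qed
next
  fix U x assume "openin (XL t) U \<and> x \<in> U"
  then obtain a b :: 'a where "x \<in> phi a" "x \<notin> phi b" "phi a - phi b \<subseteq> U"
    using open_basic by blast
  then show "\<exists>V. clopenin (XL t) V \<and> x \<in> V \<and> V \<subseteq> U"
    using clopen_basic[of t a b] by blast
qed

lemma priestley_XL:
  fixes t :: "'a::complete_lattice itself"
  assumes fr: "is_frame t"
  shows "priestley_space (XL t) (\<subseteq>)"
  unfolding priestley_space_def
proof (intro conjI ballI impI)
  show "stone_space (XL t)" by (rule stone_XL[OF fr])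
  show "partial_order_on_space (XL t) (\<subseteq>)" unfolding partial_order_on_space_def by blast
next
  fix x y assume "x \<in> topspace (XL t)" "y \<in> topspace (XL t)" "\<not> x \<subseteq> y"
  then obtain a :: 'a where a: "a \<in> x" "a \<notin> y" "prime_filter x" by (auto simp: topspace_XL pfs_iff)
  show "\<exists>U\<in>ClopUp (XL t) (\<subseteq>). x \<in> U \<and> y \<notin> U"
  proof (rule bexI[of _ "phi a"])
    show "x \<in> phi a \<and> y \<notin> phi a" using a by (simp add: phi_iff)
    show "phi a \<in> ClopUp (XL t) (\<subseteq>)" by (rule phi_ClopUp)
  qed
qed

lemma compactinD:
  assumes "compactin X S" "\<And>U. U \<in> \<U> \<Longrightarrow> openin X U" "S \<subseteq> \<Union>\<U>"
  shows "\<exists>\<F>. finite \<F> \<and> \<F> \<subseteq> \<U> \<and> S \<subseteq> \<Union>\<F>"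
  using assms unfolding compactin_def by blast

lemma upset_basic:
  fixes t :: "'a::complete_lattice itself"
  assumes fr: "is_frame t" and W: "openin (XL t) W" "upset_in (XL t) (\<subseteq>) W" and x: "x \<in> W"
  shows "\<exists>a::'a. x \<in> phi a \<and> phi a \<subseteq> W"
proof -
  let ?P = "prime_filters t"
  have "W \<subseteq> topspace (XL t)" using W(2) unfolding upset_in_def by (rule conjunct1)
  then have Wsub: "W \<subseteq> ?P" by (simp add: topspace_XL)
  have px: "prime_filter x" using subsetD[OF Wsub x] by (simp add: pfs_iff)
  have "closedin (XL t) (?P - W)" using closedin_diff[OF closedin_topspace W(1)] unfolding topspace_XL .
  then have K: "compactin (XL t) (?P - W)" using closedin_compact_space[OF compact_XL[OF fr]] by blast
  let ?U = "(\<lambda>a. ?P - phi a) ` x"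
  have "?P - W \<subseteq> \<Union>?U"
  proof
    fix y assume y: "y \<in> ?P - W"
    have "\<not> x \<subseteq> y"
    proof
      assume "x \<subseteq> y"
      then have "y \<in> W" using W(2) x y unfolding upset_in_def topspace_XL by blast
      then show False using y by blast
    qed
    then obtain a where "a \<in> x" "a \<notin> y" by blast
    then show "y \<in> \<Union>?U" using y by (auto simp: phi_iff)
  qed
  moreover have "\<And>U. U \<in> ?U \<Longrightarrow> openin (XL t) U" using open_nphi by blast
  ultimately obtain \<F> where F: "finite \<F>" "\<F> \<subseteq> ?U" "?P - W \<subseteq> \<Union>\<F>"
    using compactinD[OF K] by meson
  obtain A0 where A0: "A0 \<subseteq> x" "finite A0" "\<F> = (\<lambda>a. ?P - phi a) ` A0"
    using finite_subset_image[OF F(1) F(2)] by blast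
  have "Inf A0 \<in> x" using pf_Inf_fin[OF A0(2) px A0(1)] .
  moreover have "phi (Inf A0) \<subseteq> W"
  proof
    fix z assume z: "z \<in> phi (Inf A0)"
    then have "z \<in> ?P" using phi_sub by blast
    moreover have "z \<notin> \<Union>\<F>"
    proof
      assume "z \<in> \<Union>\<F>"
      then obtain a where "a \<in> A0" "z \<notin> phi a" using A0(3) by blast
      then show False using z phi_mono[OF Inf_lower[of a A0]] by blast
    qed
    ultimately show "z \<in> W" using F(3) by blast
  qed
  ultimately show ?thesis using px by (auto simp: phi_iff)
qed

lemma ClopUp_phi:
  fixes t :: "'a::complete_lattice itself"
  assumes fr: "is_frame t" and U: "U \<in> ClopUp (XL t) (\<subseteq>)"
  shows "\<exists>a::'a. U = phi a"
proof -
  have Uo: "openin (XL t) U" and Uc: "closedin (XL t) U" and Uu: "upset_in (XL t) (\<subseteq>) U"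
    using U unfolding ClopUp_def clopenin_def by simp_all
  have K: "compactin (XL t) U" using closedin_compact_space[OF compact_XL[OF fr] Uc] .
  let ?U = "phi ` {a::'a. phi a \<subseteq> U}"
  have "U \<subseteq> \<Union>?U" using upset_basic[OF fr Uo Uu] by blast
  moreover have "\<And>V. V \<in> ?U \<Longrightarrow> openin (XL t) V" using open_phi by blast
  ultimately obtain \<F> where F: "finite \<F>" "\<F> \<subseteq> ?U" "U \<subseteq> \<Union>\<F>"
    using compactinD[OF K] by meson
  obtain A0 where A0: "A0 \<subseteq> {a::'a. phi a \<subseteq> U}" "finite A0" "\<F> = phi ` A0"
    using finite_subset_image[OF F(1) F(2)] by blast
  have "U = phi (Sup A0)" unfolding phi_Sup_fin[OF A0(2)] using A0 F(3) by blast
  then show ?thesis by blast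
qed

lemma closure_Sup:
  fixes t :: "'a::complete_lattice itself" and S :: "'a set"
  assumes fr: "is_frame t"
  shows "XL t closure_of (\<Union>(phi ` S)) = phi (Sup S)"
proof
  show "XL t closure_of \<Union>(phi ` S) \<subseteq> phi (Sup S)"
  proof (rule closure_of_minimal)
    show "\<Union>(phi ` S) \<subseteq> phi (Sup S)"
    proof
      fix x assume "x \<in> \<Union>(phi ` S)"
      then obtain s where "s \<in> S" "x \<in> phi s" by blast
      then show "x \<in> phi (Sup S)" using phi_mono[OF Sup_upper[OF \<open>s \<in> S\<close>]] by blast
    qed
    show "closedin (XL t) (phi (Sup S))" by (rule closed_phi)
  qed
  show "phi (Sup S) \<subseteq> XL t closure_of \<Union>(phi ` S)"
  proof
    fix x assume x: "x \<in> phi (Sup S)"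
    then have px: "prime_filter x" "Sup S \<in> x" by (auto simp: phi_iff)
    show "x \<in> XL t closure_of \<Union>(phi ` S)"
      unfolding in_closure_of
    proof (intro conjI allI impI)
      show "x \<in> topspace (XL t)" using px by (simp add: topspace_XL pfs_iff)
    next
      fix T assume T: "x \<in> T \<and> openin (XL t) T"
      then obtain c d :: 'a where cd: "x \<in> phi c" "x \<notin> phi d" "phi c - phi d \<subseteq> T"
        using open_basic by blast
      show "\<exists>y. y \<in> \<Union>(phi ` S) \<and> y \<in> T"
      proof (rule ccontr)
        assume nn: "\<not> ?thesis"
        have "inf c s \<le> d" if "s \<in> S" for s
        proof (rule phi_le[OF fr])
          show "phi (inf c s) \<subseteq> phi d"
          proof
            fix y assume "y \<in> phi (inf c s)"
            then have "y \<in> phi c" "y \<in> phi s" by (auto simp: phi_inf)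
            then have "y \<notin> T" using nn that by blast
            then show "y \<in> phi d" using cd(3) \<open>y \<in> phi c\<close> by blast
          qed
        qed
        then have "Sup ((\<lambda>s. inf c s) ` S) \<le> d" by (simp add: SUP_least)
        then have "inf c (Sup S) \<le> d" using frame_Sup[OF fr, of c S] by simp
        moreover have "inf c (Sup S) \<in> x" using px cd(1) by (simp add: pf_inf phi_iff)
        ultimately have "d \<in> x" using pf_up[OF px(1)] by blast
        then show False using cd(2) px by (simp add: phi_iff)
      qed
    qed
  qed
qed

lemma upset_union:
  fixes t :: "'a::complete_lattice itself"
  assumes fr: "is_frame t" and W: "openin (XL t) W" "upset_in (XL t) (\<subseteq>) W"
  shows "W = \<Union>(phi ` {a::'a. phi a \<subseteq> W})"
  using upset_basic[OF fr W] by blast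

lemma closure_upset:
  fixes t :: "'a::complete_lattice itself"
  assumes fr: "is_frame t" and W: "openin (XL t) W" "upset_in (XL t) (\<subseteq>) W"
  shows "XL t closure_of W = phi (Sup {a::'a. phi a \<subseteq> W})"
proof -
  have "XL t closure_of W = XL t closure_of (\<Union>(phi ` {a::'a. phi a \<subseteq> W}))"
    using upset_union[OF fr W] by (rule arg_cong)
  then show ?thesis using closure_Sup[OF fr] by simp
qed


definition fimp :: "'a::complete_lattice \<Rightarrow> 'a \<Rightarrow> 'a" where
  "fimp a b = Sup {c. inf c a \<le> b}"

lemma fimp_iff:
  fixes t :: "'a::complete_lattice itself" and a b c :: 'a
  assumes fr: "is_frame t"
  shows "c \<le> fimp a b \<longleftrightarrow> inf c a \<le> b"
proof
  assume "inf c a \<le> b" then show "c \<le> fimp a b" unfolding fimp_def by (simp add: Sup_upper)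
next
  assume c: "c \<le> fimp a b"
  have "inf a (fimp a b) = Sup ((\<lambda>s. inf a s) ` {c. inf c a \<le> b})"
    unfolding fimp_def by (rule frame_Sup[OF fr])
  also have "\<dots> \<le> b" by (rule SUP_least) (simp add: inf_commute)
  finally have "inf a (fimp a b) \<le> b" .
  moreover have "inf c a \<le> inf a (fimp a b)" using inf_mono[OF c order_refl[of a]] by (simp add: inf_commute)
  ultimately show "inf c a \<le> b" by (rule order_trans[rotated])
qed

lemma down_basic:
  fixes t :: "'a::complete_lattice itself" and a b :: 'a
  assumes fr: "is_frame t"
  shows "down_of (XL t) (\<subseteq>) (phi a - phi b) = prime_filters t - phi (fimp a b)"
proof
  show "down_of (XL t) (\<subseteq>) (phi a - phi b) \<subseteq> prime_filters t - phi (fimp a b)"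
  proof
    fix y assume "y \<in> down_of (XL t) (\<subseteq>) (phi a - phi b)"
    then obtain x where y: "y \<in> prime_filters t" "x \<in> phi a" "x \<notin> phi b" "y \<subseteq> x"
      unfolding down_of_def topspace_XL by blast
    have px: "prime_filter x" "a \<in> x" "b \<notin> x" using y(2,3) by (auto simp: phi_iff)
    have "fimp a b \<notin> y"
    proof
      assume "fimp a b \<in> y"
      then have "fimp a b \<in> x" using y(4) by blast
      then have "inf (fimp a b) a \<in> x" using px by (simp add: pf_inf)
      moreover have "inf (fimp a b) a \<le> b" using fimp_iff[OF fr] by blast
      ultimately show False using pf_up[OF px(1)] px(3) by blast
    qed
    then show "y \<in> prime_filters t - phi (fimp a b)" using y(1) by (auto simp: phi_iff)
  qed
next
  show "prime_filters t - phi (fimp a b) \<subseteq> down_of (XL t) (\<subseteq>) (phi a - phi b)"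
  proof
    fix y assume y: "y \<in> prime_filters t - phi (fimp a b)"
    then have py: "prime_filter y" "fimp a b \<notin> y" by (auto simp: pfs_iff phi_iff)
    let ?F = "{z. \<exists>g\<in>y. inf g a \<le> z}"
    let ?I = "{z. z \<le> b}"
    have fF: "filt ?F" unfolding filt_def
    proof (intro conjI ballI allI impI)
      show "?F \<noteq> {}" using pf_top[OF py(1)] by blast
    next
      fix u v assume "u \<in> ?F" "u \<le> v" then show "v \<in> ?F" using order_trans by blast
    next
      fix u v assume "u \<in> ?F" "v \<in> ?F"
      then obtain g g' where g: "g \<in> y" "inf g a \<le> u" "g' \<in> y" "inf g' a \<le> v" by blast
      have "inf (inf g g') a \<le> inf u v"
      proof (rule le_infI)
        show "inf (inf g g') a \<le> u" using g(2) by (meson inf_le1 inf_mono order_refl order_trans)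
        show "inf (inf g g') a \<le> v" using g(4) by (meson inf_le2 inf_mono order_refl order_trans)
      qed
      moreover have "inf g g' \<in> y" using g py(1) by (simp add: pf_inf)
      ultimately show "inf u v \<in> ?F" by blast
    qed
    have iI: "idl ?I" unfolding idl_def by auto
    have dj: "?F \<inter> ?I = {}"
    proof (rule ccontr)
      assume "?F \<inter> ?I \<noteq> {}"
      then obtain g z where "g \<in> y" "inf g a \<le> z" "z \<le> b" by blast
      then have "g \<le> fimp a b" using fimp_iff[OF fr] order_trans by blast
      then show False using pf_up[OF py(1) \<open>g \<in> y\<close>] py(2) by blast
    qed
    obtain x where x: "prime_filter x" "?F \<subseteq> x" "x \<inter> ?I = {}" using pft[OF fr fF iI dj] by blast
    have "y \<subseteq> x"
    proof
      fix g assume "g \<in> y" then have "g \<in> ?F" by (metis (mono_tags, lifting) inf_le1 mem_Collect_eq)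
      then show "g \<in> x" using x(2) by blast
    qed
    moreover have "a \<in> x"
    proof -
      have "a \<in> ?F" using pf_top[OF py(1)] by (metis (mono_tags, lifting) inf_le2 mem_Collect_eq)
      then show ?thesis using x(2) by blast
    qed
    moreover have "b \<notin> x" using x(3) by blast
    ultimately show "y \<in> down_of (XL t) (\<subseteq>) (phi a - phi b)"
      unfolding down_of_def topspace_XL using y x(1) by (auto simp: phi_iff)
  qed
qed

lemma clopen_nphi: "clopenin (XL t) (prime_filters t - phi (a::'a::complete_lattice))"
  unfolding clopenin_def using open_nphi closed_nphi by blast

lemma down_Union: "down_of X le (\<Union>F) = \<Union>((down_of X le) ` F)"
  unfolding down_of_def by blast

lemma clopen_down:
  fixes t :: "'a::complete_lattice itself"
  assumes fr: "is_frame t" and U: "clopenin (XL t) U"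
  shows "clopenin (XL t) (down_of (XL t) (\<subseteq>) U)"
proof -
  have K: "compactin (XL t) U" using closedin_compact_space[OF compact_XL[OF fr]] U
    unfolding clopenin_def by blast
  let ?U = "{phi a - phi b | a b :: 'a. phi a - phi b \<subseteq> U}"
  have "U \<subseteq> \<Union>?U"
  proof
    fix x assume "x \<in> U"
    then obtain a b :: 'a where "x \<in> phi a" "x \<notin> phi b" "phi a - phi b \<subseteq> U"
      using open_basic[of t U x] U unfolding clopenin_def by blast
    then show "x \<in> \<Union>?U" by blast
  qed
  moreover have "openin (XL t) V" if V: "V \<in> ?U" for V
  proof -
    obtain a b :: 'a where "V = phi a - phi b" using V by blast
    then show ?thesis using clopen_basic[of t a b] unfolding clopenin_def by simp
  qed
  ultimately obtain F where F: "finite F" "F \<subseteq> ?U" "U \<subseteq> \<Union>F"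
    using compactinD[OF K] by meson
  have UF: "U = \<Union>F" using F by blast
  have cl: "clopenin (XL t) (down_of (XL t) (\<subseteq>) V)" if "V \<in> F" for V
  proof -
    have "V \<in> ?U" using that F(2) by blast
    then obtain a b :: 'a where "V = phi a - phi b" by blast
    then show ?thesis using down_basic[OF fr, of a b] clopen_nphi[of t "fimp a b"] by simp
  qed
  have "openin (XL t) (\<Union>((down_of (XL t) (\<subseteq>)) ` F))"
    using cl unfolding clopenin_def by blast
  moreover have "closedin (XL t) (\<Union>((down_of (XL t) (\<subseteq>)) ` F))"
    using cl F(1) unfolding clopenin_def by (intro closedin_Union) auto
  ultimately show ?thesis unfolding UF down_Union clopenin_def by blast
qed

lemma L_space_XL:
  fixes t :: "'a::complete_lattice itself"
  assumes fr: "is_frame t"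
  shows "L_space (XL t) (\<subseteq>)"
  unfolding L_space_def
proof (intro conjI allI impI)
  show "priestley_space (XL t) (\<subseteq>)" by (rule priestley_XL[OF fr])
next
  fix U assume "clopenin (XL t) U"
  then show "clopenin (XL t) (down_of (XL t) (\<subseteq>) U)" by (rule clopen_down[OF fr])
next
  fix U assume "openin (XL t) U \<and> upset_in (XL t) (\<subseteq>) U"
  then show "openin (XL t) (XL t closure_of U)" using closure_upset[OF fr, of U] open_phi by simp
qed

section \<open>Way below\<close>

lemma wb_le: "way_below (a::'a::complete_lattice) b \<Longrightarrow> a \<le> b"
proof -
  assume "way_below a b"
  moreover have "b \<le> Sup {b}" by simp
  ultimately obtain T where "T \<subseteq> {b}" "a \<le> Sup T" unfolding way_below_def by blast
  moreover have "Sup T \<le> b" using \<open>T \<subseteq> {b}\<close> by (simp add: Sup_le_iff subset_iff)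
  ultimately show "a \<le> b" using order_trans by blast
qed

lemma wb_mono: "a' \<le> a \<Longrightarrow> way_below (a::'a::complete_lattice) b \<Longrightarrow> b \<le> b' \<Longrightarrow> way_below a' b'"
  unfolding way_below_def by (meson order_trans)

lemma wb_bot: "way_below (bot::'a::complete_lattice) b"
  unfolding way_below_def by (intro allI impI exI[of _ "{}"]) simp

lemma wb_sup:
  assumes "way_below (a::'a::complete_lattice) c" "way_below b c"
  shows "way_below (sup a b) c"
  unfolding way_below_def
proof (intro allI impI)
  fix S assume "c \<le> Sup S"
  then obtain T1 T2 where "T1 \<subseteq> S" "finite T1" "a \<le> Sup T1" "T2 \<subseteq> S" "finite T2" "b \<le> Sup T2"
    using assms unfolding way_below_def by meson
  then show "\<exists>T\<subseteq>S. finite T \<and> sup a b \<le> Sup T"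
    by (intro exI[of _ "T1 \<union> T2"]) (simp add: Sup_union_distrib le_supI1 le_supI2)
qed

lemma wb_Sup_fin:
  assumes "finite D" shows "(\<And>d. d \<in> D \<Longrightarrow> way_below d (c::'a::complete_lattice)) \<Longrightarrow> way_below (Sup D) c"
  using assms
proof (induction D rule: finite_induct)
  case empty then show ?case by (simp add: wb_bot)
next
  case (insert x F) then show ?case by (simp add: wb_sup)
qed

lemma compact_Sup_fin:
  assumes "finite K" "\<And>k. k \<in> K \<Longrightarrow> compact_el (k::'a::complete_lattice)"
  shows "compact_el (Sup K)"
  unfolding compact_el_def
proof (rule wb_Sup_fin[OF assms(1)])
  fix d assume "d \<in> K"
  then show "way_below d (Sup K)" using assms(2)[OF \<open>d \<in> K\<close>] unfolding compact_el_def
    by (meson Sup_upper order_refl wb_mono)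
qed

lemma wb_sp_iff:
  fixes t :: "'a::complete_lattice itself" and a c :: 'a
  assumes fr: "is_frame t"
  shows "way_below_sp (XL t) (\<subseteq>) (phi c) (phi a) \<longleftrightarrow> way_below c a"
proof
  assume wb: "way_below c a"
  show "way_below_sp (XL t) (\<subseteq>) (phi c) (phi a)" unfolding way_below_sp_def
  proof (intro allI impI)
    fix W assume W: "openin (XL t) W \<and> upset_in (XL t) (\<subseteq>) W" and sub: "phi a \<subseteq> XL t closure_of W"
    let ?I = "{d::'a. phi d \<subseteq> W}"
    have "phi a \<subseteq> phi (Sup ?I)" using sub closure_upset[OF fr, of W] W by simp
    then have "a \<le> Sup ?I" by (rule phi_le[OF fr])
    then obtain T where T: "T \<subseteq> ?I" "finite T" "c \<le> Sup T" using wb unfolding way_below_def by meson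
    have "phi c \<subseteq> phi (Sup T)" using phi_mono[OF T(3)] .
    also have "\<dots> = \<Union>(phi ` T)" by (rule phi_Sup_fin[OF T(2)])
    also have "\<dots> \<subseteq> W" using T(1) by blast
    finally show "phi c \<subseteq> W" .
  qed
next
  assume wbs: "way_below_sp (XL t) (\<subseteq>) (phi c) (phi a)"
  show "way_below c a" unfolding way_below_def
  proof (intro allI impI)
    fix S assume aS: "a \<le> Sup S"
    let ?W = "\<Union>(phi ` S)"
    have Wo: "openin (XL t) ?W" using open_phi by blast
    have Wu: "upset_in (XL t) (\<subseteq>) ?W" using phi_upset[of t] unfolding upset_in_def by blast
    have "phi a \<subseteq> XL t closure_of ?W" using phi_mono[OF aS] closure_Sup[OF fr, of S] by simp
    then have cW: "phi c \<subseteq> ?W" using wbs Wo Wu unfolding way_below_sp_def by blast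
    have K: "compactin (XL t) (phi c)" using closedin_compact_space[OF compact_XL[OF fr] closed_phi] .
    obtain F where F: "finite F" "F \<subseteq> phi ` S" "phi c \<subseteq> \<Union>F"
      using compactinD[OF K _ cW] open_phi by blast
    obtain T where T: "T \<subseteq> S" "finite T" "F = phi ` T"
      using finite_subset_image[OF F(1) F(2)] by blast
    have "phi c \<subseteq> phi (Sup T)" using F(3) T(3) phi_Sup_fin[OF T(2)] by simp
    then have "c \<le> Sup T" by (rule phi_le[OF fr])
    then show "\<exists>T\<subseteq>S. finite T \<and> c \<le> Sup T" using T by blast
  qed
qed

lemma ker_phi:
  fixes t :: "'a::complete_lattice itself" and a :: 'a
  assumes fr: "is_frame t"
  shows "ker_sp (XL t) (\<subseteq>) (phi a) = \<Union>(phi ` {c. way_below c a})"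
proof
  show "ker_sp (XL t) (\<subseteq>) (phi a) \<subseteq> \<Union>(phi ` {c. way_below c a})"
  proof
    fix x assume "x \<in> ker_sp (XL t) (\<subseteq>) (phi a)"
    then obtain V where V: "V \<in> ClopUp (XL t) (\<subseteq>)" "way_below_sp (XL t) (\<subseteq>) V (phi a)" "x \<in> V"
      unfolding ker_sp_def by blast
    obtain c :: 'a where "V = phi c" using ClopUp_phi[OF fr V(1)] by blast
    then show "x \<in> \<Union>(phi ` {c. way_below c a})" using V wb_sp_iff[OF fr] by blast
  qed
  show "\<Union>(phi ` {c. way_below c a}) \<subseteq> ker_sp (XL t) (\<subseteq>) (phi a)"
    unfolding ker_sp_def using wb_sp_iff[OF fr] phi_ClopUp by blast
qed
section \<open>Prime elements and the spatial part\<close>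

lemma prime_above:
  fixes t :: "'a::complete_lattice itself" and k b :: 'a
  assumes fr: "is_frame t" and k: "compact_el k" and nk: "\<not> k \<le> b"
  shows "\<exists>p. b \<le> p \<and> \<not> k \<le> p \<and> (\<forall>x y. inf x y \<le> p \<longrightarrow> x \<le> p \<or> y \<le> p)"
proof -
  define Q where "Q = {p. b \<le> p \<and> \<not> k \<le> p}"
  define A where "A = (\<lambda>p. {z. z \<le> p}) ` Q"
  have memA: "{z. z \<le> q} \<in> A" if "b \<le> q" "\<not> k \<le> q" for q
    unfolding A_def Q_def using that by (intro imageI) simp
  have "\<exists>M\<in>A. \<forall>X\<in>A. M \<subseteq> X \<longrightarrow> X = M"
  proof (rule subset_Zorn)
    fix C assume C: "subset.chain A C"
    have sub: "C \<subseteq> A" using C unfolding subset_chain_def by blast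
    show "\<exists>U\<in>A. \<forall>X\<in>C. X \<subseteq> U"
    proof (cases "C = {}")
      case True
      then show ?thesis using memA[OF order_refl nk] by blast
    next
      case False
      let ?s = "Sup (\<Union>C)"
      obtain X0 where X0: "X0 \<in> C" using False by blast
      then have "X0 \<in> A" using sub by blast
      then obtain p0 where p0: "X0 = {z. z \<le> p0}" "b \<le> p0" unfolding A_def Q_def by blast
      then have "b \<in> \<Union>C" using X0 by blast
      then have bs: "b \<le> ?s" by (rule Sup_upper)
      have ks: "\<not> k \<le> ?s"
      proof
        assume "k \<le> ?s"
        then have "\<exists>T. T \<subseteq> \<Union>C \<and> finite T \<and> k \<le> Sup T"
          using k unfolding compact_el_def way_below_def by blast
        then obtain T where T: "T \<subseteq> \<Union>C" "finite T" "k \<le> Sup T" by blast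
        obtain B where B: "B \<in> C" "T \<subseteq> B" using finite_subset_Union_chain[OF T(2) T(1) False C] by blast
        then have "B \<in> A" using sub by blast
        then obtain p where p: "B = {z. z \<le> p}" "\<not> k \<le> p" unfolding A_def Q_def by blast
        have "Sup T \<le> p" using B(2) p(1) by (simp add: Sup_le_iff subset_iff)
        then show False using T(3) p(2) order_trans by blast
      qed
      have "\<forall>X\<in>C. X \<subseteq> {z. z \<le> ?s}"
      proof (intro ballI subsetI)
        fix X z assume "X \<in> C" "z \<in> X"
        then have "z \<in> \<Union>C" by blast
        then show "z \<in> {z. z \<le> ?s}" by (simp add: Sup_upper)
      qed
      then show ?thesis using memA[OF bs ks] by blast
    qed
  qed
  then obtain M where M: "M \<in> A" and max: "\<And>X. X \<in> A \<Longrightarrow> M \<subseteq> X \<Longrightarrow> X = M" by blast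
  obtain p where p: "M = {z. z \<le> p}" "b \<le> p" "\<not> k \<le> p" using M unfolding A_def Q_def by blast
  have pmax: "q \<le> p" if "p \<le> q" "\<not> k \<le> q" for q
  proof -
    have "b \<le> q" using that(1) p(2) by (rule order_trans[rotated])
    then have "{z. z \<le> q} \<in> A" using memA that(2) by blast
    moreover have "M \<subseteq> {z. z \<le> q}" unfolding p(1) using that(1) by (auto intro: order_trans)
    ultimately have "{z. z \<le> q} = M" using max by blast
    then show ?thesis using p(1) by blast
  qed
  have "inf x y \<le> p \<longrightarrow> x \<le> p \<or> y \<le> p" for x y
  proof (intro impI, rule ccontr)
    assume xy: "inf x y \<le> p" "\<not> (x \<le> p \<or> y \<le> p)"
    have kx: "k \<le> sup p x"
    proof (rule ccontr)
      assume "\<not> k \<le> sup p x"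
      then have "sup p x \<le> p" by (rule pmax[OF sup_ge1])
      then show False using xy by simp
    qed
    have ky: "k \<le> sup p y"
    proof (rule ccontr)
      assume "\<not> k \<le> sup p y"
      then have "sup p y \<le> p" by (rule pmax[OF sup_ge1])
      then show False using xy by simp
    qed
    have "k \<le> inf (sup p x) (sup p y)" using kx ky by simp
    also have "\<dots> = sup p (inf x y)" by (rule sym[OF frame_dist2[OF fr]])
    also have "\<dots> \<le> p" using xy(1) by simp
    finally show False using p(3) by blast
  qed
  then show ?thesis using p by blast
qed

lemma prime_elem_pf:
  fixes p :: "'a::complete_lattice"
  assumes "\<not> top \<le> p" "\<forall>x y. inf x y \<le> p \<longrightarrow> x \<le> p \<or> y \<le> p"
  shows "prime_filter {z. \<not> z \<le> p}"
  unfolding prime_filter_def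
proof (intro conjI allI impI)
  show "top \<in> {z. \<not> z \<le> p}" using assms(1) by simp
  show "bot \<notin> {z. \<not> z \<le> p}" by simp
next
  fix a b assume "a \<in> {z. \<not> z \<le> p}" "a \<le> b"
  then show "b \<in> {z. \<not> z \<le> p}" using order_trans by blast
next
  fix a b assume "a \<in> {z. \<not> z \<le> p}" "b \<in> {z. \<not> z \<le> p}"
  then show "inf a b \<in> {z. \<not> z \<le> p}" using assms(2) by blast
next
  fix a b assume "sup a b \<in> {z. \<not> z \<le> p}"
  then show "a \<in> {z. \<not> z \<le> p} \<or> b \<in> {z. \<not> z \<le> p}" by auto
qed

lemma down_single: "down_of (XL t) (\<subseteq>) {y} = {x \<in> prime_filters t. x \<subseteq> y}"
  unfolding down_of_def topspace_XL by blast

lemma down_single_p: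
  fixes p :: "'a::complete_lattice"
  assumes py: "prime_filter y" and yp: "\<forall>z. z \<notin> y \<longleftrightarrow> z \<le> p"
  shows "down_of (XL t) (\<subseteq>) {y} = prime_filters t - phi p"
proof -
  have key: "x \<subseteq> y \<longleftrightarrow> p \<notin> x" if "prime_filter x" for x
  proof
    assume "x \<subseteq> y" then show "p \<notin> x" using yp by blast
  next
    assume "p \<notin> x"
    show "x \<subseteq> y"
    proof
      fix a assume "a \<in> x"
      show "a \<in> y"
      proof (rule ccontr)
        assume "a \<notin> y" then have "a \<le> p" using yp by blast
        then show False using pf_up[OF that \<open>a \<in> x\<close>] \<open>p \<notin> x\<close> by blast
      qed
    qed
  qed
  have "x \<in> {x \<in> prime_filters t. x \<subseteq> y} \<longleftrightarrow> x \<in> prime_filters t - phi p" for x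
    by (cases "prime_filter x") (simp_all add: pfs_iff phi_iff key)
  then show ?thesis unfolding down_single by blast
qed

lemma spatial_iff:
  fixes t :: "'a::complete_lattice itself" and y :: "'a set"
  assumes fr: "is_frame t"
  shows "y \<in> spatial_part (XL t) (\<subseteq>) \<longleftrightarrow> prime_filter y \<and> (\<exists>p. \<forall>z. z \<notin> y \<longleftrightarrow> z \<le> p)"
proof
  assume "prime_filter y \<and> (\<exists>p. \<forall>z. z \<notin> y \<longleftrightarrow> z \<le> p)"
  then obtain p where py: "prime_filter y" "\<forall>z. z \<notin> y \<longleftrightarrow> z \<le> p" by blast
  show "y \<in> spatial_part (XL t) (\<subseteq>)"
    unfolding spatial_part_def using down_single_p[OF py, of t] clopen_nphi[of t p] py(1)
    by (simp add: topspace_XL pfs_iff)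
next
  assume y: "y \<in> spatial_part (XL t) (\<subseteq>)"
  then have py: "prime_filter y" and cl: "clopenin (XL t) {x \<in> prime_filters t. x \<subseteq> y}"
    unfolding spatial_part_def down_single by (auto simp: topspace_XL pfs_iff)
  let ?P = "prime_filters t" and ?D = "{x \<in> prime_filters t. x \<subseteq> y}"
  have "closedin (XL t) (?P - ?D)"
    using closedin_diff[OF closedin_topspace, of "XL t" ?D] cl unfolding clopenin_def topspace_XL by blast
  then have K: "compactin (XL t) (?P - ?D)" using closedin_compact_space[OF compact_XL[OF fr]] by blast
  have cov: "?P - ?D \<subseteq> \<Union>(phi ` (- y))"
  proof
    fix x assume x: "x \<in> ?P - ?D"
    then obtain a where "a \<in> x" "a \<notin> y" by blast
    then show "x \<in> \<Union>(phi ` (- y))" using x by (auto simp: phi_iff pfs_iff)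
  qed
  have op: "\<And>U. U \<in> phi ` (- y) \<Longrightarrow> openin (XL t) U" using open_phi by blast
  obtain F where F0: "finite F \<and> F \<subseteq> phi ` (- y) \<and> ?P - ?D \<subseteq> \<Union>F"
    using compactinD[OF K op cov] by (rule exE)
  then have F: "finite F" "F \<subseteq> phi ` (- y)" "?P - ?D \<subseteq> \<Union>F" by simp_all
  obtain A0 where A0: "A0 \<subseteq> - y" "finite A0" "F = phi ` A0"
    using finite_subset_image[OF F(1) F(2)] by blast
  let ?m = "Sup A0"
  have sub: "?P - ?D \<subseteq> phi ?m" using F(3) A0(3) phi_Sup_fin[OF A0(2)] by simp
  have my: "?m \<notin> y" using pf_Sup_fin[OF A0(2) py] A0(1) by blast
  have "\<forall>z. z \<notin> y \<longleftrightarrow> z \<le> ?m"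
  proof (intro allI iffI)
    fix z assume zy: "z \<notin> y"
    show "z \<le> ?m"
    proof (rule ccontr)
      assume "\<not> z \<le> ?m"
      then obtain x where x: "prime_filter x" "z \<in> x" "?m \<notin> x" using pft_elem[OF fr] by blast
      then have "x \<in> ?P - ?D" using zy by (auto simp: pfs_iff)
      then show False using sub x by (auto simp: phi_iff)
    qed
  next
    fix z assume "z \<le> ?m" then show "z \<notin> y" using my pf_up[OF py] by blast
  qed
  then show "prime_filter y \<and> (\<exists>p. \<forall>z. z \<notin> y \<longleftrightarrow> z \<le> p)" using py by blast
qed

lemma min_spatial:
  fixes t :: "'a::complete_lattice itself" and k :: 'a
  assumes fr: "is_frame t" and k: "compact_el k" and y: "y \<in> min_of (\<subseteq>) (phi k)"
  shows "y \<in> spatial_part (XL t) (\<subseteq>)"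
proof -
  have yk: "y \<in> phi k" and ymin: "\<And>y'. y' \<in> phi k \<Longrightarrow> y' \<subseteq> y \<Longrightarrow> y' = y"
    using y unfolding min_of_def by blast+
  have py: "prime_filter y" "k \<in> y" using yk by (auto simp: phi_iff)
  let ?m = "Sup (- y)"
  have km: "\<not> k \<le> ?m"
  proof
    assume "k \<le> ?m"
    then obtain T where T: "T \<subseteq> - y" "finite T" "k \<le> Sup T"
      using k unfolding compact_el_def way_below_def by meson
    then have "Sup T \<in> y" using pf_up[OF py(1) py(2)] by blast
    then show False using pf_Sup_fin[OF T(2) py(1)] T(1) by blast
  qed
  obtain p where p: "?m \<le> p" "\<not> k \<le> p" "\<forall>x y. inf x y \<le> p \<longrightarrow> x \<le> p \<or> y \<le> p"
    using prime_above[OF fr k km] by blast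
  let ?y' = "{z. \<not> z \<le> p}"
  have tp: "\<not> top \<le> p" using p(2) top_greatest order_trans by blast
  have py': "prime_filter ?y'" by (rule prime_elem_pf[OF tp p(3)])
  have "?y' \<in> phi k" using py' p(2) by (simp add: phi_iff)
  moreover have "?y' \<subseteq> y"
  proof
    fix z assume z: "z \<in> ?y'"
    show "z \<in> y"
    proof (rule ccontr)
      assume "z \<notin> y" then have "z \<le> ?m" by (simp add: Sup_upper)
      then show False using z p(1) order_trans by blast
    qed
  qed
  ultimately have "?y' = y" using ymin by blast
  then have "\<forall>z. z \<notin> y \<longleftrightarrow> z \<le> p" by blast
  then show ?thesis using spatial_iff[OF fr] py by blast
qed

lemma phi_ClopSUp:
  fixes t :: "'a::complete_lattice itself" and k :: 'a
  assumes fr: "is_frame t" and k: "compact_el k"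
  shows "phi k \<in> ClopSUp (XL t) (\<subseteq>)"
  unfolding ClopSUp_def scott_upset_def
  using phi_ClopUp[of k t] closed_phi[of t k] phi_upset[of t k] min_spatial[OF fr k] by blast

lemma algebraic_L_XL:
  fixes t :: "'a::complete_lattice itself"
  assumes alg: "algebraic_frame t"
  shows "algebraic_L_space (XL t) (\<subseteq>)"
proof -
  have fr: "is_frame t" using alg unfolding algebraic_frame_def by blast
  have algs: "\<And>a::'a. a = Sup {b. compact_el b \<and> b \<le> a}" using alg unfolding algebraic_frame_def by blast
  show ?thesis unfolding algebraic_L_space_def
  proof (intro conjI ballI)
    show "L_space (XL t) (\<subseteq>)" by (rule L_space_XL[OF fr])
  next
    fix U assume "U \<in> ClopUp (XL t) (\<subseteq>)"
    then obtain a :: 'a where Ua: "U = phi a" using ClopUp_phi[OF fr] by blast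
    show "U \<subseteq> XL t closure_of core_sp (XL t) (\<subseteq>) U"
    proof
      fix x assume "x \<in> U"
      then have px: "prime_filter x" "a \<in> x" using Ua by (auto simp: phi_iff)
      show "x \<in> XL t closure_of core_sp (XL t) (\<subseteq>) U"
        unfolding in_closure_of
      proof (intro conjI allI impI)
        show "x \<in> topspace (XL t)" using px by (simp add: topspace_XL pfs_iff)
      next
        fix T assume T: "x \<in> T \<and> openin (XL t) T"
        then obtain c d :: 'a where cd: "x \<in> phi c" "x \<notin> phi d" "phi c - phi d \<subseteq> T"
          using open_basic by blast
        have acx: "inf a c \<in> x" using px cd(1) by (simp add: pf_inf phi_iff)
        have "\<not> inf a c \<le> d"
        proof
          assume "inf a c \<le> d" then have "d \<in> x" using pf_up[OF px(1) acx] by blast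
          then show False using cd(2) px(1) by (simp add: phi_iff)
        qed
        then obtain k where k: "compact_el k" "k \<le> inf a c" "\<not> k \<le> d"
        proof -
          assume r: "\<And>k. compact_el k \<Longrightarrow> k \<le> inf a c \<Longrightarrow> \<not> k \<le> d \<Longrightarrow> thesis"
          show thesis
          proof (rule ccontr)
            assume "\<not> thesis"
            then have "\<forall>k\<in>{b. compact_el b \<and> b \<le> inf a c}. k \<le> d" using r by blast
            then have "Sup {b. compact_el b \<and> b \<le> inf a c} \<le> d" by (intro Sup_least) blast
            then have "inf a c \<le> d" using algs[of "inf a c"] by simp
            then show False using \<open>\<not> inf a c \<le> d\<close> by blast
          qed
        qed
        obtain z where z: "prime_filter z" "k \<in> z" "d \<notin> z" using pft_elem[OF fr k(3)] by blast
        have "k \<le> a" "k \<le> c" using k(2) by simp_all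
        then have "z \<in> phi a" "z \<in> phi c" using z pf_up[OF z(1) z(2)] by (auto simp: phi_iff)
        have "phi k \<subseteq> U" using Ua phi_mono[OF \<open>k \<le> a\<close>] by simp
        then have "z \<in> core_sp (XL t) (\<subseteq>) U"
          unfolding core_sp_def using phi_ClopSUp[OF fr k(1)] z by (auto simp: phi_iff)
        moreover have "z \<in> T" using cd(3) \<open>z \<in> phi c\<close> z by (auto simp: phi_iff)
        ultimately show "\<exists>y. y \<in> core_sp (XL t) (\<subseteq>) U \<and> y \<in> T" by blast
      qed
    qed
  qed
qed

lemma ker_cond_iff:
  fixes t :: "'a::complete_lattice itself"
  assumes fr: "is_frame t"
  shows "(\<forall>U\<in>ClopUp (XL t) (\<subseteq>). \<forall>V\<in>ClopUp (XL t) (\<subseteq>).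
            ker_sp (XL t) (\<subseteq>) (U \<inter> V) = ker_sp (XL t) (\<subseteq>) U \<inter> ker_sp (XL t) (\<subseteq>) V)
     \<longleftrightarrow> (\<forall>a b c::'a. way_below a b \<and> way_below a c \<longrightarrow> way_below a (inf b c))"
proof
  assume H: "\<forall>U\<in>ClopUp (XL t) (\<subseteq>). \<forall>V\<in>ClopUp (XL t) (\<subseteq>).
            ker_sp (XL t) (\<subseteq>) (U \<inter> V) = ker_sp (XL t) (\<subseteq>) U \<inter> ker_sp (XL t) (\<subseteq>) V"
  show "\<forall>a b c::'a. way_below a b \<and> way_below a c \<longrightarrow> way_below a (inf b c)"
  proof (intro allI impI)
    fix a b c :: 'a assume abc: "way_below a b \<and> way_below a c"
    have "phi a \<subseteq> ker_sp (XL t) (\<subseteq>) (phi b) \<inter> ker_sp (XL t) (\<subseteq>) (phi c)"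
      using abc unfolding ker_phi[OF fr] by blast
    also have "\<dots> = ker_sp (XL t) (\<subseteq>) (phi (inf b c))"
      using H phi_ClopUp[of b t] phi_ClopUp[of c t] by (simp add: phi_inf)
    also have "\<dots> = \<Union>(phi ` {d. way_below d (inf b c)})" by (rule ker_phi[OF fr])
    finally have cov: "phi a \<subseteq> \<Union>(phi ` {d. way_below d (inf b c)})" .
    have K: "compactin (XL t) (phi a)" using closedin_compact_space[OF compact_XL[OF fr] closed_phi] .
    have op: "\<And>U. U \<in> phi ` {d. way_below d (inf b c)} \<Longrightarrow> openin (XL t) U" using open_phi by blast
    obtain F where F: "finite F" "F \<subseteq> phi ` {d. way_below d (inf b c)}" "phi a \<subseteq> \<Union>F"
      using compactinD[OF K op cov] by blast
    obtain D where D: "D \<subseteq> {d. way_below d (inf b c)}" "finite D" "F = phi ` D"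
      using finite_subset_image[OF F(1) F(2)] by blast
    have "phi a \<subseteq> phi (Sup D)" using F(3) D(3) phi_Sup_fin[OF D(2)] by simp
    then have "a \<le> Sup D" by (rule phi_le[OF fr])
    moreover have "way_below (Sup D) (inf b c)" using wb_Sup_fin[OF D(2)] D(1) by blast
    ultimately show "way_below a (inf b c)" using wb_mono by blast
  qed
next
  assume S: "\<forall>a b c::'a. way_below a b \<and> way_below a c \<longrightarrow> way_below a (inf b c)"
  show "\<forall>U\<in>ClopUp (XL t) (\<subseteq>). \<forall>V\<in>ClopUp (XL t) (\<subseteq>).
            ker_sp (XL t) (\<subseteq>) (U \<inter> V) = ker_sp (XL t) (\<subseteq>) U \<inter> ker_sp (XL t) (\<subseteq>) V"
  proof (intro ballI)
    fix U V assume "U \<in> ClopUp (XL t) (\<subseteq>)" "V \<in> ClopUp (XL t) (\<subseteq>)"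
    then obtain a b :: 'a where U: "U = phi a" and V: "V = phi b" using ClopUp_phi[OF fr] by metis
    have "ker_sp (XL t) (\<subseteq>) (U \<inter> V) = \<Union>(phi ` {d. way_below d (inf a b)})"
      unfolding U V phi_inf[symmetric] by (rule ker_phi[OF fr])
    also have "\<dots> = \<Union>(phi ` {d. way_below d a}) \<inter> \<Union>(phi ` {d. way_below d b})"
    proof
      show "\<Union>(phi ` {d. way_below d (inf a b)}) \<subseteq> \<Union>(phi ` {d. way_below d a}) \<inter> \<Union>(phi ` {d. way_below d b})"
      proof
        fix x assume "x \<in> \<Union>(phi ` {d. way_below d (inf a b)})"
        then obtain d where d: "way_below d (inf a b)" "x \<in> phi d" by blast
        have "way_below d a" "way_below d b" using wb_mono[OF order_refl d(1)] by simp_all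
        then show "x \<in> \<Union>(phi ` {d. way_below d a}) \<inter> \<Union>(phi ` {d. way_below d b})" using d(2) by blast
      qed
    next
      show "\<Union>(phi ` {d. way_below d a}) \<inter> \<Union>(phi ` {d. way_below d b}) \<subseteq> \<Union>(phi ` {d. way_below d (inf a b)})"
      proof
        fix x assume "x \<in> \<Union>(phi ` {d. way_below d a}) \<inter> \<Union>(phi ` {d. way_below d b})"
        then obtain d1 d2 where d: "way_below d1 a" "x \<in> phi d1" "way_below d2 b" "x \<in> phi d2" by blast
        have "way_below (inf d1 d2) a" "way_below (inf d1 d2) b"
          using wb_mono[OF _ d(1) order_refl] wb_mono[OF _ d(3) order_refl] by simp_all
        then have "way_below (inf d1 d2) (inf a b)" using S by blast
        moreover have "x \<in> phi (inf d1 d2)" using d by (simp add: phi_inf)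
        ultimately show "x \<in> \<Union>(phi ` {d. way_below d (inf a b)})" by blast
      qed
    qed
    also have "\<dots> = ker_sp (XL t) (\<subseteq>) U \<inter> ker_sp (XL t) (\<subseteq>) V"
      unfolding U V ker_phi[OF fr] ..
    finally show "ker_sp (XL t) (\<subseteq>) (U \<inter> V) = ker_sp (XL t) (\<subseteq>) U \<inter> ker_sp (XL t) (\<subseteq>) V" .
  qed
qed

section \<open>The spatial part\<close>

abbreviation YY :: "'a::complete_lattice itself \<Rightarrow> 'a set set" where
  "YY t \<equiv> spatial_part (XL t) (\<subseteq>)"

abbreviation SY :: "'a::complete_lattice itself \<Rightarrow> 'a set topology" where
  "SY t \<equiv> spatial_topology (XL t) (\<subseteq>)"

lemma Y_pf:
  fixes t :: "'a::complete_lattice itself"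
  assumes fr: "is_frame t" and y: "y \<in> YY t"
  shows "prime_filter y"
  using spatial_iff[OF fr] y by blast

lemma Y_Sup:
  fixes t :: "'a::complete_lattice itself" and S :: "'a set"
  assumes fr: "is_frame t"
  shows "phi (Sup S) \<inter> YY t = \<Union>((\<lambda>s. phi s \<inter> YY t) ` S)"
proof
  show "phi (Sup S) \<inter> YY t \<subseteq> \<Union>((\<lambda>s. phi s \<inter> YY t) ` S)"
  proof
    fix y assume y: "y \<in> phi (Sup S) \<inter> YY t"
    then have py: "prime_filter y" "Sup S \<in> y" by (auto simp: phi_iff)
    obtain p where p: "\<forall>z. z \<notin> y \<longleftrightarrow> z \<le> p" using y spatial_iff[OF fr] by blast
    have "\<exists>s\<in>S. s \<in> y"
    proof (rule ccontr)
      assume "\<not> ?thesis"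
      then have "\<forall>s\<in>S. s \<le> p" using p by blast
      then have "Sup S \<le> p" by (intro Sup_least) blast
      then show False using p py(2) by blast
    qed
    then show "y \<in> \<Union>((\<lambda>s. phi s \<inter> YY t) ` S)" using y py(1) by (auto simp: phi_iff)
  qed
  show "\<Union>((\<lambda>s. phi s \<inter> YY t) ` S) \<subseteq> phi (Sup S) \<inter> YY t"
  proof
    fix y assume "y \<in> \<Union>((\<lambda>s. phi s \<inter> YY t) ` S)"
    then obtain s where "s \<in> S" "y \<in> phi s" "y \<in> YY t" by blast
    then show "y \<in> phi (Sup S) \<inter> YY t" using phi_mono[OF Sup_upper[OF \<open>s \<in> S\<close>]] by blast
  qed
qed

lemma ClopUp_ex:
  fixes t :: "'a::complete_lattice itself"
  assumes fr: "is_frame t"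
  shows "(\<exists>U\<in>ClopUp (XL t) (\<subseteq>). V = U \<inter> YY t) \<longleftrightarrow> (\<exists>a::'a. V = phi a \<inter> YY t)"
proof
  assume "\<exists>U\<in>ClopUp (XL t) (\<subseteq>). V = U \<inter> YY t"
  then obtain U where U: "U \<in> ClopUp (XL t) (\<subseteq>)" "V = U \<inter> YY t" by blast
  obtain a :: 'a where "U = phi a" using ClopUp_phi[OF fr U(1)] by blast
  then show "\<exists>a::'a. V = phi a \<inter> YY t" using U(2) by blast
next
  assume "\<exists>a::'a. V = phi a \<inter> YY t"
  then obtain a :: 'a where "V = phi a \<inter> YY t" by blast
  then show "\<exists>U\<in>ClopUp (XL t) (\<subseteq>). V = U \<inter> YY t" using phi_ClopUp[of a t] by blast
qed

lemma istop_Y: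
  fixes t :: "'a::complete_lattice itself"
  assumes fr: "is_frame t"
  shows "istopology (\<lambda>V. \<exists>a::'a. V = phi a \<inter> YY t)"
  unfolding istopology_def
proof (intro conjI allI impI)
  fix S T assume "\<exists>a::'a. S = phi a \<inter> YY t" "\<exists>a::'a. T = phi a \<inter> YY t"
  then obtain a b :: 'a where "S = phi a \<inter> YY t" "T = phi b \<inter> YY t" by blast
  then have "S \<inter> T = phi (inf a b) \<inter> YY t" by (auto simp: phi_inf)
  then show "\<exists>a::'a. S \<inter> T = phi a \<inter> YY t" by blast
next
  fix K assume K: "\<forall>V\<in>K. \<exists>a::'a. V = phi a \<inter> YY t"
  then obtain f where f: "\<forall>V\<in>K. V = phi (f V) \<inter> YY t" by metis
  have "\<Union>K = \<Union>((\<lambda>s. phi s \<inter> YY t) ` (f ` K))" using f by auto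
  also have "\<dots> = phi (Sup (f ` K)) \<inter> YY t" by (rule Y_Sup[OF fr, symmetric])
  finally show "\<exists>a::'a. \<Union>K = phi a \<inter> YY t" by blast
qed

lemma open_Y:
  fixes t :: "'a::complete_lattice itself"
  assumes fr: "is_frame t"
  shows "openin (SY t) V \<longleftrightarrow> (\<exists>a::'a. V = phi a \<inter> YY t)"
proof -
  have e: "(\<lambda>V. \<exists>U\<in>ClopUp (XL t) (\<subseteq>). V = U \<inter> YY t) = (\<lambda>V. \<exists>a::'a. V = phi a \<inter> YY t)"
    by (intro ext) (rule ClopUp_ex[OF fr])
  show ?thesis unfolding spatial_topology_def e using istop_Y[OF fr] by simp
qed

lemma phiY_sub: "phi a \<inter> YY t \<subseteq> YY t" by blast

lemma topspace_Y:
  fixes t :: "'a::complete_lattice itself"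
  assumes fr: "is_frame t"
  shows "topspace (SY t) = YY t"
proof
  show "topspace (SY t) \<subseteq> YY t" unfolding topspace_def using open_Y[OF fr] by blast
  have "openin (SY t) (phi (top::'a) \<inter> YY t)" using open_Y[OF fr] by blast
  moreover have "phi (top::'a) \<inter> YY t = YY t"
    using Y_pf[OF fr] by (auto simp: phi_iff pf_top)
  ultimately show "YY t \<subseteq> topspace (SY t)" by (metis openin_subset)
qed

lemma phiY_top:
  fixes t :: "'a::complete_lattice itself"
  assumes fr: "is_frame t"
  shows "phi (top::'a) \<inter> YY t = YY t"
  using Y_pf[OF fr] by (auto simp: phi_iff pf_top)

lemma alg_witness:
  fixes t :: "'a::complete_lattice itself" and a b :: 'a
  assumes alg: "algebraic_frame t" and nab: "\<not> a \<le> b"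
  shows "\<exists>k. compact_el k \<and> k \<le> a \<and> \<not> k \<le> b"
proof (rule ccontr)
  assume "\<not> ?thesis"
  then have "\<forall>k\<in>{k. compact_el k \<and> k \<le> a}. k \<le> b" by blast
  then have "Sup {k. compact_el k \<and> k \<le> a} \<le> b" by (intro Sup_least) blast
  moreover have "a = Sup {k. compact_el k \<and> k \<le> a}" using alg unfolding algebraic_frame_def by blast
  ultimately show False using nab by simp
qed

lemma spatialY:
  fixes t :: "'a::complete_lattice itself" and a b :: 'a
  assumes alg: "algebraic_frame t" and sub: "phi a \<inter> YY t \<subseteq> phi b \<inter> YY t"
  shows "a \<le> b"
proof (rule ccontr)
  have fr: "is_frame t" using alg unfolding algebraic_frame_def by blast
  assume nab: "\<not> a \<le> b"
  obtain k where k: "compact_el k" "k \<le> a" "\<not> k \<le> b" using alg_witness[OF alg nab] by blast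
  obtain p where p: "b \<le> p" "\<not> k \<le> p" "\<forall>x y. inf x y \<le> p \<longrightarrow> x \<le> p \<or> y \<le> p"
    using prime_above[OF fr k(1) k(3)] by blast
  have tp: "\<not> top \<le> p" using p(2) top_greatest order_trans by blast
  let ?y = "{z. \<not> z \<le> p}"
  have py: "prime_filter ?y" by (rule prime_elem_pf[OF tp p(3)])
  have yY: "?y \<in> YY t" using spatial_iff[OF fr] py by blast
  have "a \<in> ?y" using k(2) p(2) order_trans by blast
  then have "?y \<in> phi a \<inter> YY t" using py yY by (simp add: phi_iff)
  then have "?y \<in> phi b \<inter> YY t" by (rule subsetD[OF sub])
  then have "b \<in> ?y" by (simp add: phi_iff)
  then show False using p(1) by simp
qed

lemma compact_Y_iff:
  fixes t :: "'a::complete_lattice itself" and a :: 'a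
  assumes alg: "algebraic_frame t"
  shows "compactin (SY t) (phi a \<inter> YY t) \<longleftrightarrow> compact_el a"
proof -
  have fr: "is_frame t" using alg unfolding algebraic_frame_def by blast
  show ?thesis
  proof
    assume K: "compactin (SY t) (phi a \<inter> YY t)"
    show "compact_el a" unfolding compact_el_def way_below_def
    proof (intro allI impI)
      fix S assume aS: "a \<le> Sup S"
      have cov: "phi a \<inter> YY t \<subseteq> \<Union>((\<lambda>s. phi s \<inter> YY t) ` S)"
        using phi_mono[OF aS] Y_Sup[OF fr, of S] by blast
      have op: "\<And>U. U \<in> (\<lambda>s. phi s \<inter> YY t) ` S \<Longrightarrow> openin (SY t) U" using open_Y[OF fr] by blast
      obtain F where F0: "finite F \<and> F \<subseteq> (\<lambda>s. phi s \<inter> YY t) ` S \<and> phi a \<inter> YY t \<subseteq> \<Union>F"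
        using compactinD[OF K op cov] by (rule exE)
      then have F: "finite F" "F \<subseteq> (\<lambda>s. phi s \<inter> YY t) ` S" "phi a \<inter> YY t \<subseteq> \<Union>F" by simp_all
      obtain T where T: "T \<subseteq> S" "finite T" "F = (\<lambda>s. phi s \<inter> YY t) ` T"
        using finite_subset_image[OF F(1) F(2)] by blast
      have "phi a \<inter> YY t \<subseteq> phi (Sup T) \<inter> YY t" using F(3) T(3) Y_Sup[OF fr, of T] by simp
      then have "a \<le> Sup T" by (rule spatialY[OF alg])
      then show "\<exists>T\<subseteq>S. finite T \<and> a \<le> Sup T" using T by blast
    qed
  next
    assume ca: "compact_el a"
    show "compactin (SY t) (phi a \<inter> YY t)" unfolding compactin_def
    proof (intro conjI allI impI)
      show "phi a \<inter> YY t \<subseteq> topspace (SY t)" using topspace_Y[OF fr] by blast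
    next
      fix \<U> assume U: "(\<forall>U\<in>\<U>. openin (SY t) U) \<and> phi a \<inter> YY t \<subseteq> \<Union>\<U>"
      then have "\<forall>U\<in>\<U>. \<exists>b::'a. U = phi b \<inter> YY t" using open_Y[OF fr] by blast
      then obtain f where f: "\<forall>U\<in>\<U>. U = phi (f U) \<inter> YY t" by metis
      have UU: "\<Union>\<U> = phi (Sup (f ` \<U>)) \<inter> YY t"
      proof -
        have "\<Union>\<U> = \<Union>((\<lambda>s. phi s \<inter> YY t) ` (f ` \<U>))" using f by auto
        also have "\<dots> = phi (Sup (f ` \<U>)) \<inter> YY t" by (rule Y_Sup[OF fr, symmetric])
        finally show ?thesis .
      qed
      have "a \<le> Sup (f ` \<U>)" using U UU by (intro spatialY[OF alg]) simp
      then have "\<exists>T. T \<subseteq> f ` \<U> \<and> finite T \<and> a \<le> Sup T"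
        using ca unfolding compact_el_def way_below_def by blast
      then obtain T where T: "T \<subseteq> f ` \<U>" "finite T" "a \<le> Sup T" by blast
      obtain U0 where U0: "U0 \<subseteq> \<U>" "finite U0" "T = f ` U0"
        using finite_subset_image[OF T(2) T(1)] by blast
      have "phi a \<inter> YY t \<subseteq> phi (Sup T) \<inter> YY t" using phi_mono[OF T(3)] by blast
      also have "\<dots> = \<Union>((\<lambda>s. phi s \<inter> YY t) ` T)" by (rule Y_Sup[OF fr])
      also have "\<dots> = \<Union>U0" using U0(1,3) f by auto
      finally show "\<exists>\<F>. finite \<F> \<and> \<F> \<subseteq> \<U> \<and> phi a \<inter> YY t \<subseteq> \<Union>\<F>" using U0 by blast
    qed
  qed
qed

lemma closure_Y_single:
  fixes t :: "'a::complete_lattice itself"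
  assumes fr: "is_frame t" and y: "y \<in> YY t"
  shows "SY t closure_of {y} = {x \<in> YY t. x \<subseteq> y}"
proof
  show "SY t closure_of {y} \<subseteq> {x \<in> YY t. x \<subseteq> y}"
  proof
    fix x assume x: "x \<in> SY t closure_of {y}"
    then have xY: "x \<in> YY t" unfolding in_closure_of topspace_Y[OF fr] by blast
    have "a \<in> y" if "a \<in> x" for a :: 'a
    proof -
      have "openin (SY t) (phi a \<inter> YY t)" using open_Y[OF fr] by blast
      moreover have "x \<in> phi a \<inter> YY t" using that xY Y_pf[OF fr xY] by (simp add: phi_iff)
      ultimately have "y \<in> phi a \<inter> YY t" using x unfolding in_closure_of by blast
      then show ?thesis by (simp add: phi_iff)
    qed
    then show "x \<in> {x \<in> YY t. x \<subseteq> y}" using xY by blast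
  qed
  show "{x \<in> YY t. x \<subseteq> y} \<subseteq> SY t closure_of {y}"
  proof
    fix x assume x: "x \<in> {x \<in> YY t. x \<subseteq> y}"
    show "x \<in> SY t closure_of {y}" unfolding in_closure_of
    proof (intro conjI allI impI)
      show "x \<in> topspace (SY t)" using x topspace_Y[OF fr] by blast
    next
      fix T assume T: "x \<in> T \<and> openin (SY t) T"
      then obtain a :: 'a where a: "T = phi a \<inter> YY t" using open_Y[OF fr] by blast
      then have "a \<in> x" using T by (simp add: phi_iff)
      then have "a \<in> y" using x by blast
      then have "y \<in> T" using a y Y_pf[OF fr y] by (simp add: phi_iff)
      then show "\<exists>z. z \<in> {y} \<and> z \<in> T" by blast
    qed
  qed
qed

lemma sober_Y:
  fixes t :: "'a::complete_lattice itself"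
  assumes fr: "is_frame t"
  shows "sober_space (SY t)"
  unfolding sober_space_def
proof (intro allI impI)
  fix C assume C: "irreducible_closed (SY t) C"
  have Cc: "closedin (SY t) C" and Cne: "C \<noteq> {}"
    and irr: "\<And>A B. closedin (SY t) A \<Longrightarrow> closedin (SY t) B \<Longrightarrow> C \<subseteq> A \<union> B \<Longrightarrow> C \<subseteq> A \<or> C \<subseteq> B"
    using C unfolding irreducible_closed_def by blast+
  have CY: "C \<subseteq> YY t" using closedin_subset[OF Cc] topspace_Y[OF fr] by simp
  have "openin (SY t) (YY t - C)" using Cc unfolding closedin_def topspace_Y[OF fr] by blast
  then obtain c :: 'a where c: "YY t - C = phi c \<inter> YY t" using open_Y[OF fr] by blast
  have clo: "closedin (SY t) (YY t - phi x)" for x :: 'a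
  proof -
    have "YY t - (YY t - phi x) = phi x \<inter> YY t" by blast
    then show ?thesis unfolding closedin_def topspace_Y[OF fr] using open_Y[OF fr] by auto
  qed
  define p where "p = Sup {a::'a. phi a \<inter> C = {}}"
  have pC: "phi p \<inter> C = {}"
  proof -
    have "phi p \<inter> YY t = \<Union>((\<lambda>s. phi s \<inter> YY t) ` {a::'a. phi a \<inter> C = {}})"
      unfolding p_def by (rule Y_Sup[OF fr])
    then show ?thesis using CY by blast
  qed
  have below: "a \<le> p" if "phi a \<inter> C = {}" for a :: 'a
    unfolding p_def using that by (simp add: Sup_upper)
  have prime: "\<forall>x y. inf x y \<le> p \<longrightarrow> x \<le> p \<or> y \<le> p"
  proof (intro allI impI)
    fix x y :: 'a assume "inf x y \<le> p"
    then have "phi (inf x y) \<inter> C = {}" using pC phi_mono by blast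
    then have "C \<subseteq> (YY t - phi x) \<union> (YY t - phi y)" using CY by (auto simp: phi_inf)
    then have "C \<subseteq> YY t - phi x \<or> C \<subseteq> YY t - phi y" using irr clo by blast
    then have "phi x \<inter> C = {} \<or> phi y \<inter> C = {}" by blast
    then show "x \<le> p \<or> y \<le> p" using below by blast
  qed
  have tp: "\<not> top \<le> p"
  proof
    assume "top \<le> p"
    then have "phi (top::'a) \<inter> C = {}" using pC phi_mono by blast
    then show False using phiY_top[OF fr] CY Cne by blast
  qed
  let ?y = "{z. \<not> z \<le> p}"
  have py: "prime_filter ?y" by (rule prime_elem_pf[OF tp prime])
  have yY: "?y \<in> YY t" using spatial_iff[OF fr] py by blast
  have cly: "SY t closure_of {?y} = YY t - phi p"
  proof -
    have "x \<subseteq> ?y \<longleftrightarrow> x \<notin> phi p" if "x \<in> YY t" for x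
    proof -
      have px: "prime_filter x" using Y_pf[OF fr that] .
      show ?thesis
      proof
        assume "x \<subseteq> ?y" then show "x \<notin> phi p" by (auto simp: phi_iff)
      next
        assume "x \<notin> phi p"
        then have "p \<notin> x" using px by (simp add: phi_iff)
        then show "x \<subseteq> ?y" using pf_up[OF px] by blast
      qed
    qed
    then show ?thesis unfolding closure_Y_single[OF fr yY] by blast
  qed
  have Ceq: "C = YY t - phi p"
  proof
    show "C \<subseteq> YY t - phi p" using CY pC by blast
    have "phi c \<inter> C = {}" using c CY by blast
    then have "c \<le> p" by (rule below)
    then have "phi c \<subseteq> phi p" by (rule phi_mono)
    then show "YY t - phi p \<subseteq> C" using c by blast
  qed
  show "\<exists>!x. x \<in> topspace (SY t) \<and> C = SY t closure_of {x}"
  proof (rule ex1I[of _ ?y])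
    show "?y \<in> topspace (SY t) \<and> C = SY t closure_of {?y}" using yY topspace_Y[OF fr] Ceq cly by simp
  next
    fix x assume x: "x \<in> topspace (SY t) \<and> C = SY t closure_of {x}"
    then have xY: "x \<in> YY t" using topspace_Y[OF fr] by simp
    have e: "{z \<in> YY t. z \<subseteq> x} = {z \<in> YY t. z \<subseteq> ?y}"
      using x closure_Y_single[OF fr xY] closure_Y_single[OF fr yY] Ceq cly by simp
    have "x \<in> {z \<in> YY t. z \<subseteq> x}" using xY by simp
    then have "x \<in> {z \<in> YY t. z \<subseteq> ?y}" by (simp only: e)
    then have 1: "x \<subseteq> ?y" by simp
    have "?y \<in> {z \<in> YY t. z \<subseteq> ?y}" using yY by simp
    then have "?y \<in> {z \<in> YY t. z \<subseteq> x}" by (simp only: e)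
    then have 2: "?y \<subseteq> x" by simp
    show "x = ?y" using 1 2 by (rule subset_antisym)
  qed
qed

lemma basis_Y:
  fixes t :: "'a::complete_lattice itself"
  assumes alg: "algebraic_frame t"
  shows "\<forall>U x. openin (SY t) U \<and> x \<in> U \<longrightarrow> (\<exists>V. openin (SY t) V \<and> compactin (SY t) V \<and> x \<in> V \<and> V \<subseteq> U)"
proof (intro allI impI)
  have fr: "is_frame t" using alg unfolding algebraic_frame_def by blast
  fix U x assume Ux: "openin (SY t) U \<and> x \<in> U"
  then obtain a :: 'a where a: "U = phi a \<inter> YY t" using open_Y[OF fr] by blast
  have "a = Sup {k. compact_el k \<and> k \<le> a}" using alg unfolding algebraic_frame_def by blast
  then have "x \<in> phi (Sup {k. compact_el k \<and> k \<le> a}) \<inter> YY t" using Ux a by simp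
  then have "x \<in> \<Union>((\<lambda>s. phi s \<inter> YY t) ` {k. compact_el k \<and> k \<le> a})" using Y_Sup[OF fr] by blast
  then obtain k where k: "compact_el k" "k \<le> a" "x \<in> phi k \<inter> YY t" by blast
  show "\<exists>V. openin (SY t) V \<and> compactin (SY t) V \<and> x \<in> V \<and> V \<subseteq> U"
  proof (intro exI conjI)
    show "openin (SY t) (phi k \<inter> YY t)" using open_Y[OF fr] by blast
    show "compactin (SY t) (phi k \<inter> YY t)" using compact_Y_iff[OF alg] k(1) by blast
    show "x \<in> phi k \<inter> YY t" by (rule k(3))
    show "phi k \<inter> YY t \<subseteq> U" using a phi_mono[OF k(2)] by blast
  qed
qed

lemma scb_iff:
  fixes t :: "'a::complete_lattice itself"
  assumes alg: "algebraic_frame t"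
  shows "stably_compactly_based (SY t) \<longleftrightarrow> (\<forall>k k'::'a. compact_el k \<and> compact_el k' \<longrightarrow> compact_el (inf k k'))"
proof -
  have fr: "is_frame t" using alg unfolding algebraic_frame_def by blast
  have oc: "openin (SY t) U \<and> compactin (SY t) U \<longleftrightarrow> (\<exists>k::'a. compact_el k \<and> U = phi k \<inter> YY t)" for U
  proof
    assume H: "openin (SY t) U \<and> compactin (SY t) U"
    then obtain k :: 'a where k: "U = phi k \<inter> YY t" using open_Y[OF fr] by blast
    then have "compact_el k" using H compact_Y_iff[OF alg, of k] by simp
    then show "\<exists>k::'a. compact_el k \<and> U = phi k \<inter> YY t" using k by blast
  next
    assume "\<exists>k::'a. compact_el k \<and> U = phi k \<inter> YY t"
    then obtain k :: 'a where k: "compact_el k" "U = phi k \<inter> YY t" by blast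
    have "openin (SY t) U" using k(2) open_Y[OF fr] by blast
    moreover have "compactin (SY t) U" using k compact_Y_iff[OF alg, of k] by simp
    ultimately show "openin (SY t) U \<and> compactin (SY t) U" by blast
  qed
  have "(\<forall>U V. openin (SY t) U \<and> compactin (SY t) U \<and> openin (SY t) V \<and> compactin (SY t) V \<longrightarrow>
        compactin (SY t) (U \<inter> V)) \<longleftrightarrow> (\<forall>k k'::'a. compact_el k \<and> compact_el k' \<longrightarrow> compact_el (inf k k'))"
  proof
    assume H: "\<forall>U V. openin (SY t) U \<and> compactin (SY t) U \<and> openin (SY t) V \<and> compactin (SY t) V \<longrightarrow>
        compactin (SY t) (U \<inter> V)"
    show "\<forall>k k'::'a. compact_el k \<and> compact_el k' \<longrightarrow> compact_el (inf k k')"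
    proof (intro allI impI)
      fix k k' :: 'a assume kk: "compact_el k \<and> compact_el k'"
      have "compactin (SY t) ((phi k \<inter> YY t) \<inter> (phi k' \<inter> YY t))"
        using H oc kk by blast
      moreover have "(phi k \<inter> YY t) \<inter> (phi k' \<inter> YY t) = phi (inf k k') \<inter> YY t" by (auto simp: phi_inf)
      ultimately show "compact_el (inf k k')" using compact_Y_iff[OF alg] by simp
    qed
  next
    assume H: "\<forall>k k'::'a. compact_el k \<and> compact_el k' \<longrightarrow> compact_el (inf k k')"
    show "\<forall>U V. openin (SY t) U \<and> compactin (SY t) U \<and> openin (SY t) V \<and> compactin (SY t) V \<longrightarrow>
        compactin (SY t) (U \<inter> V)"
    proof (intro allI impI)
      fix U V assume UV: "openin (SY t) U \<and> compactin (SY t) U \<and> openin (SY t) V \<and> compactin (SY t) V"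
      then obtain k k' :: 'a where k: "compact_el k" "U = phi k \<inter> YY t" "compact_el k'" "V = phi k' \<inter> YY t"
        using oc by meson
      have "U \<inter> V = phi (inf k k') \<inter> YY t" using k by (auto simp: phi_inf)
      then show "compactin (SY t) (U \<inter> V)" using compact_Y_iff[OF alg] H k by simp
    qed
  qed
  then show ?thesis unfolding stably_compactly_based_def using sober_Y[OF fr] basis_Y[OF alg] by blast
qed

lemma stab_iff:
  fixes t :: "'a::complete_lattice itself"
  assumes alg: "algebraic_frame t"
  shows "(\<forall>a b c::'a. way_below a b \<and> way_below a c \<longrightarrow> way_below a (inf b c))
     \<longleftrightarrow> (\<forall>k k'::'a. compact_el k \<and> compact_el k' \<longrightarrow> compact_el (inf k k'))"
proof
  assume S: "\<forall>a b c::'a. way_below a b \<and> way_below a c \<longrightarrow> way_below a (inf b c)"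
  show "\<forall>k k'::'a. compact_el k \<and> compact_el k' \<longrightarrow> compact_el (inf k k')"
  proof (intro allI impI)
    fix k k' :: 'a assume kk: "compact_el k \<and> compact_el k'"
    have w1: "way_below k k" "way_below k' k'" using kk unfolding compact_el_def by blast+
    have "way_below (inf k k') k" by (rule wb_mono[OF inf_le1 w1(1) order_refl])
    moreover have "way_below (inf k k') k'" by (rule wb_mono[OF inf_le2 w1(2) order_refl])
    ultimately show "compact_el (inf k k')" unfolding compact_el_def using S by blast
  qed
next
  assume H: "\<forall>k k'::'a. compact_el k \<and> compact_el k' \<longrightarrow> compact_el (inf k k')"
  have below: "\<exists>k. compact_el k \<and> a \<le> k \<and> k \<le> b" if "way_below a b" for a b :: 'a
  proof -
    have "b = Sup {k. compact_el k \<and> k \<le> b}" using alg unfolding algebraic_frame_def by blast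
    then have "b \<le> Sup {k. compact_el k \<and> k \<le> b}" by simp
    then have "\<exists>T. T \<subseteq> {k. compact_el k \<and> k \<le> b} \<and> finite T \<and> a \<le> Sup T"
      using that unfolding way_below_def by blast
    then obtain T where T: "T \<subseteq> {k. compact_el k \<and> k \<le> b}" "finite T" "a \<le> Sup T" by blast
    have "compact_el (Sup T)" using compact_Sup_fin[OF T(2)] T(1) by blast
    moreover have "Sup T \<le> b" using T(1) by (intro Sup_least) blast
    ultimately show ?thesis using T(3) by blast
  qed
  show "\<forall>a b c::'a. way_below a b \<and> way_below a c \<longrightarrow> way_below a (inf b c)"
  proof (intro allI impI)
    fix a b c :: 'a assume abc: "way_below a b \<and> way_below a c"
    obtain k1 where k1: "compact_el k1" "a \<le> k1" "k1 \<le> b" using below abc by blast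
    obtain k2 where k2: "compact_el k2" "a \<le> k2" "k2 \<le> c" using below abc by blast
    have ck: "compact_el (inf k1 k2)" using H k1(1) k2(1) by blast
    have l1: "a \<le> inf k1 k2" using k1(2) k2(2) by simp
    have l2: "inf k1 k2 \<le> inf b c" using k1(3) k2(3) by (rule inf_mono)
    have w: "way_below (inf k1 k2) (inf k1 k2)" using ck unfolding compact_el_def .
    show "way_below a (inf b c)" by (rule wb_mono[OF l1 w l2])
  qed
qed

theorem theorem5p4:
  fixes t :: "'a::complete_lattice itself"
  assumes "algebraic_frame t"
  shows "(arithmetic_frame t \<longleftrightarrow> arithmetic_L_space (XL t) (\<subseteq>))
       \<and> (arithmetic_L_space (XL t) (\<subseteq>) \<longleftrightarrow>
            stably_compactly_based (spatial_topology (XL t) (\<subseteq>)))"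
proof -
  have alg: "algebraic_frame t" by (rule assms)
  have fr: "is_frame t" using alg unfolding algebraic_frame_def by blast
  let ?stab = "\<forall>a b c::'a. way_below a b \<and> way_below a c \<longrightarrow> way_below a (inf b c)"
  have A: "arithmetic_frame t \<longleftrightarrow> ?stab" unfolding arithmetic_frame_def using alg by blast
  have B: "arithmetic_L_space (XL t) (\<subseteq>) \<longleftrightarrow> ?stab"
    unfolding arithmetic_L_space_def using algebraic_L_XL[OF alg] ker_cond_iff[OF fr] by blast
  have C: "stably_compactly_based (spatial_topology (XL t) (\<subseteq>)) \<longleftrightarrow> ?stab"
    using scb_iff[OF alg] stab_iff[OF alg] by blast
  show ?thesis using A B C by blast
qed

end
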